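(* Under the standing assumptions below, for every $x\in\mathcal X$, $s\in\mathcal S$ and $\gamma\in\mathbb R^I_+$, the dual value function satisfies $$D(\gamma,x,s)=\inf_{\lambda\in\mathbb R^I_+}\ \sup_{a\in\tilde{\mathcal A}(x,s)}\Big[r(x,a,s)+\sum_{i=1}^I\big(\gamma^ig^i(x,a,s)+\lambda^i(g^i(x,a,s)-\bar g^i)\big)+\beta\,\mathbb E_s D(\gamma+\lambda,x',s')\Big],$$ where $x'=\zeta(x,a,s)$ and $\mathbb E_s$ is expectation over $s'\sim\pi(\cdot|s)$.
   Context: Setup. Let $\mathcal S$ be a finite set and $(s_t)_{t\ge0}$ a Markov chain on $\mathcal S$ with transition probabilities $\pi(s'|s)>0$ for all $s,s'\in\mathcal S$; for a shock history $s^t=(s_0,\dots,s_t)\in\mathcal S^{t+1}$ write $\pi^t(s^t|s_0)$ for its probability given $s_0$, and $\mathbb E_{s_t}$ (equivalently $\mathbb E_{s^t}$) for expectation over future shocks conditional on the history $s^t$. Let $\mathcal A\subset\mathbb R^n$ be a finite set, $\mathcal X\subseteq\mathbb R^m$ a countable set, $\zeta:\mathcal X\times\mathcal A\times\mathcal S\to\mathcal X$, $p:\mathcal X\times\mathcal A\times\mathcal S\to\mathbb R$, $r,g^1,\dots,g^I:\mathcal X\times\mathcal A\times\mathcal S\to\mathbb R$ bounded functions, $\bar g^1,\dots,\bar g^I\in\mathbb R$ constants and $\beta\in(0,1)$. A plan is a family $a=(a(s^t))_{t\ge0,\,s^t\in\mathcal S^{t+1}}$ with $a(s^t)\in\mathcal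 A$; given $x_0\in\mathcal X$ it induces states $x(s^0)=x_0$, $x(s^{t+1})=\zeta(x(s^t),a(s^t),s_t)$. Let $\tilde{\mathcal A}(x,s)=\{a\in\mathcal A:p(x,a,s)\ge0\}$ and let $\tilde{\mathcal A}^\infty(x_0)$ be the set of plans with $a(s^t)\in\tilde{\mathcal A}(x(s^t),s_t)$ for all $t,s^t$. A plan is feasible for $(x_0,s_0)$ if it lies in $\tilde{\mathcal A}^\infty(x_0)$ and satisfies the forward-looking constraints $\mathbb E_{s_t}\sum_{n=0}^\infty\beta^ng^i(x(s^{t+n}),a(s^{t+n}),s_{t+n})\ge\bar g^i$ for all $t$, $s^t$, $i$. Standing assumption: for every $x_0\in\mathcal X$, $s_0\in\mathcal S$ a feasible plan exists. Pre-action histories: $\mathcal H^t=\mathcal S^{t+1}\times\mathcal A^t$ with elements $h^t=(s_0,a_0,\dots,s_{t-1},a_{t-1},s_t)$; along $s^t$ a plan generates the history $h^t=(s_0,a(s^0),\dots,s_{t-1},a(s^{t-1}),s_t)$. Dual value function. $\Lambda$ is the set of families $(\lambda^i(h^t))_{t\ge0,h^t\in\mathcal H^t,1\le i\le I}$ with $\lambda^i(h^t)\ge0$ and $\sum_t\sum_{h^t}\sum_i\beta^t\lambda^i(h^t)\pi^t(s^t|s_0)<\infty$ ($s^t$ the shock history in $h^t$). For $\gamma\in\mathbb R^I_+$ the Lagrangian is $L(a,\lambda;\gamma,x_0,s_0)=\mathbb E_{s_0}\sum_{t\ge0}\beta^t\Big[r(x(s^t),a(s^t),s_t)+\sum_i\gamma^ig^i(x(s^t),a(s^t),s_t)+\sum_i\lambda^i(h^t)\Big(\sum_{n\ge0}\beta^ng^i(x(s^{t+n}),a(s^{t+n}),s_{t+n})-\bar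 g^i\Big)\Big]$, with $h^t$ the history generated by the plan, and $D(\gamma,x_0,s_0)=\inf_{\lambda\in\Lambda}\sup_{a\in\tilde{\mathcal A}^\infty(x_0)}L(a,\lambda;\gamma,x_0,s_0)$. *)

theory Defs
  imports "HOL-Analysis.Analysis"
begin

text \<open>Shock histories s^t = (s_0,...,s_t) are nonempty lists in chronological order.
  Transition matrix: P s s' = pi(s'|s).
  Constraint index set {1..I} is a finite type 'i.\<close>

primrec prob_path :: "('s \<Rightarrow> 's \<Rightarrow> real) \<Rightarrow> 's \<Rightarrow> 's list \<Rightarrow> real" where
  "prob_path P s [] = 1"
| "prob_path P s (s' # e) = P s s' * prob_path P s' e"

definition Eh :: "('s::finite \<Rightarrow> 's \<Rightarrow> real) \<Rightarrow> 's list \<Rightarrow> nat \<Rightarrow> ('s list \<Rightarrow> real) \<Rightarrow> real" where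
  "Eh P h n f = (\<Sum>e\<in>{e::'s list. length e = n}. prob_path P (last h) e * f (h @ e))"

definition disc :: "real \<Rightarrow> ('s::finite \<Rightarrow> 's \<Rightarrow> real) \<Rightarrow> 's list \<Rightarrow> ('s list \<Rightarrow> real) \<Rightarrow> real" where
  "disc \<beta> P h f = (\<Sum>n. \<beta> ^ n * Eh P h n f)"

text \<open>State x(s^k) induced by plan a from x0: xst .. h k is the state at history take (k+1) h.\<close>
primrec xst :: "('x \<Rightarrow> 'a \<Rightarrow> 's \<Rightarrow> 'x) \<Rightarrow> ('s list \<Rightarrow> 'a) \<Rightarrow> 'x \<Rightarrow> 's list \<Rightarrow> nat \<Rightarrow> 'x" where
  "xst \<zeta> a x0 h 0 = x0"
| "xst \<zeta> a x0 h (Suc k) = \<zeta> (xst \<zeta> a x0 h k) (a (take (Suc k) h)) (h ! k)"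

definition stateof :: "('x \<Rightarrow> 'a \<Rightarrow> 's \<Rightarrow> 'x) \<Rightarrow> ('s list \<Rightarrow> 'a) \<Rightarrow> 'x \<Rightarrow> 's list \<Rightarrow> 'x" where
  "stateof \<zeta> a x0 h = xst \<zeta> a x0 h (length h - 1)"

text \<open>Pre-action history h^t = (s_0,a_0,...,s_{t-1},a_{t-1},s_t) is encoded as
  ([(s_0,a_0),...,(s_{t-1},a_{t-1})], s_t).\<close>
definition histgen :: "('s list \<Rightarrow> 'a) \<Rightarrow> 's list \<Rightarrow> ('s \<times> 'a) list \<times> 's" where
  "histgen a h = (map (\<lambda>j. (h ! j, a (take (Suc j) h))) [0..<length h - 1], last h)"

definition Hset :: "'a set \<Rightarrow> nat \<Rightarrow> (('s \<times> 'a) list \<times> 's) set" where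
  "Hset A t = {(q, s). length q = t \<and> (\<forall>y\<in>set q. snd y \<in> A)}"

definition shocks :: "('s \<times> 'a) list \<times> 's \<Rightarrow> 's list" where
  "shocks h = map fst (fst h) @ [snd h]"

definition histprob :: "('s \<Rightarrow> 's \<Rightarrow> real) \<Rightarrow> 's \<Rightarrow> 's list \<Rightarrow> real" where
  "histprob P s0 sh = (if hd sh = s0 then prob_path P s0 (tl sh) else 0)"

definition Lam :: "'a set \<Rightarrow> real \<Rightarrow> ('s \<Rightarrow> 's \<Rightarrow> real) \<Rightarrow> 's
    \<Rightarrow> ((('s \<times> 'a) list \<times> 's) \<Rightarrow> 'i::finite \<Rightarrow> real) set" where
  "Lam A \<beta> P s0 = {l. (\<forall>h i. 0 \<le> l h i) \<and>
      summable (\<lambda>t. \<Sum>h\<in>Hset A t. \<Sum>i\<in>UNIV. \<beta> ^ t * l h i * histprob P s0 (shocks h))}"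

definition plans :: "'a set \<Rightarrow> ('x \<Rightarrow> 'a \<Rightarrow> 's \<Rightarrow> real) \<Rightarrow> ('x \<Rightarrow> 'a \<Rightarrow> 's \<Rightarrow> 'x) \<Rightarrow> 'x
    \<Rightarrow> ('s list \<Rightarrow> 'a) set" where
  "plans A p \<zeta> x0 = {a. \<forall>h. h \<noteq> [] \<longrightarrow>
      a h \<in> A \<and> 0 \<le> p (stateof \<zeta> a x0 h) (a h) (last h)}"

definition feasible :: "'a set \<Rightarrow> ('x \<Rightarrow> 'a \<Rightarrow> 's \<Rightarrow> real) \<Rightarrow> ('x \<Rightarrow> 'a \<Rightarrow> 's \<Rightarrow> 'x)
    \<Rightarrow> ('i \<Rightarrow> 'x \<Rightarrow> 'a \<Rightarrow> 's::finite \<Rightarrow> real) \<Rightarrow> ('i \<Rightarrow> real) \<Rightarrow> real \<Rightarrow> ('s \<Rightarrow> 's \<Rightarrow> real)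
    \<Rightarrow> 'x \<Rightarrow> 's \<Rightarrow> ('s list \<Rightarrow> 'a) \<Rightarrow> bool" where
  "feasible A p \<zeta> g gbar \<beta> P x0 s0 a \<longleftrightarrow> a \<in> plans A p \<zeta> x0 \<and>
     (\<forall>h i. h \<noteq> [] \<and> hd h = s0 \<longrightarrow>
        gbar i \<le> disc \<beta> P h (\<lambda>h'. g i (stateof \<zeta> a x0 h') (a h') (last h')))"

definition Lag :: "('x \<Rightarrow> 'a \<Rightarrow> 's \<Rightarrow> real) \<Rightarrow> ('i::finite \<Rightarrow> 'x \<Rightarrow> 'a \<Rightarrow> 's::finite \<Rightarrow> real)
    \<Rightarrow> ('i \<Rightarrow> real) \<Rightarrow> ('x \<Rightarrow> 'a \<Rightarrow> 's \<Rightarrow> 'x) \<Rightarrow> real \<Rightarrow> ('s \<Rightarrow> 's \<Rightarrow> real)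
    \<Rightarrow> ('s list \<Rightarrow> 'a) \<Rightarrow> ((('s \<times> 'a) list \<times> 's) \<Rightarrow> 'i \<Rightarrow> real) \<Rightarrow> ('i \<Rightarrow> real)
    \<Rightarrow> 'x \<Rightarrow> 's \<Rightarrow> real" where
  "Lag r g gbar \<zeta> \<beta> P a l \<gamma> x0 s0 =
     (\<Sum>t. \<beta> ^ t * Eh P [s0] t (\<lambda>h.
        r (stateof \<zeta> a x0 h) (a h) (last h)
        + (\<Sum>i\<in>UNIV. \<gamma> i * g i (stateof \<zeta> a x0 h) (a h) (last h))
        + (\<Sum>i\<in>UNIV. l (histgen a h) i *
             (disc \<beta> P h (\<lambda>h'. g i (stateof \<zeta> a x0 h') (a h') (last h')) - gbar i))))"

definition Dval :: "'a set \<Rightarrow> ('x \<Rightarrow> 'a \<Rightarrow> 's \<Rightarrow> real) \<Rightarrow> ('x \<Rightarrow> 'a \<Rightarrow> 's \<Rightarrow> real)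
    \<Rightarrow> ('i::finite \<Rightarrow> 'x \<Rightarrow> 'a \<Rightarrow> 's::finite \<Rightarrow> real) \<Rightarrow> ('i \<Rightarrow> real) \<Rightarrow> ('x \<Rightarrow> 'a \<Rightarrow> 's \<Rightarrow> 'x)
    \<Rightarrow> real \<Rightarrow> ('s \<Rightarrow> 's \<Rightarrow> real) \<Rightarrow> ('i \<Rightarrow> real) \<Rightarrow> 'x \<Rightarrow> 's \<Rightarrow> real" where
  "Dval A p r g gbar \<zeta> \<beta> P \<gamma> x0 s0 =
     (INF l\<in>Lam A \<beta> P s0. SUP a\<in>plans A p \<zeta> x0. Lag r g gbar \<zeta> \<beta> P a l \<gamma> x0 s0)"

end

theory Submission
  imports Defs
begin

lemma finite_len: "finite {e::'s::finite list. length e = n}"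
  using finite_lists_length_eq[of "UNIV::'s set" n] by simp

lemma len_Suc_eq: "{e::'s list. length e = Suc n} = (\<lambda>(c,e). c # e) ` (UNIV \<times> {e. length e = n})"
  by (auto simp: length_Suc_conv image_iff)

lemma sum_len_Suc:
  "(\<Sum>e\<in>{e::'s::finite list. length e = Suc n}. \<phi> e) = (\<Sum>c\<in>UNIV. \<Sum>e\<in>{e. length e = n}. \<phi> (c # e))"
proof -
  have inj: "inj_on (\<lambda>(c,e). c # e) (UNIV \<times> {e::'s list. length e = n})"
    by (auto simp: inj_on_def)
  have "(\<Sum>e\<in>{e::'s::finite list. length e = Suc n}. \<phi> e) = (\<Sum>ce\<in>UNIV \<times> {e. length e = n}. \<phi> ((\<lambda>(c,e). c # e) ce))"
    unfolding len_Suc_eq by (rule sum.reindex[OF inj, unfolded comp_def])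
  also have "\<dots> = (\<Sum>c\<in>UNIV. \<Sum>e\<in>{e. length e = n}. \<phi> (c # e))"
    unfolding sum.cartesian_product by (simp add: case_prod_unfold)
  finally show ?thesis .
qed

lemma len0: "{e::'s list. length e = 0} = {[]}" by auto

lemma prob_path_nonneg: "(\<forall>s s'. 0 \<le> P s s') \<Longrightarrow> 0 \<le> prob_path P s e"
  by (induction e arbitrary: s) auto

lemma sum_prob_path:
  assumes "\<forall>s. (\<Sum>s'\<in>UNIV. P s s') = 1"
  shows "(\<Sum>e\<in>{e::'s::finite list. length e = n}. prob_path P s e) = 1"
proof (induction n arbitrary: s)
  case 0 then show ?case by (simp add: len0)
next
  case (Suc n)
  show ?case unfolding sum_len_Suc
    by (simp add: sum_distrib_left[symmetric] Suc assms)
qed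

lemma Eh_0: "Eh P h 0 f = f h"
  by (simp add: Eh_def len0)

lemma Eh_Suc_single:
  "Eh P [s] (Suc n) f = (\<Sum>s1\<in>UNIV. P s s1 * Eh P [s1] n (\<lambda>h. f (s # h)))"
  unfolding Eh_def sum_len_Suc
  by (simp add: sum_distrib_left mult.assoc)

lemma Eh_cong:
  "(\<And>e. length e = n \<Longrightarrow> f (h @ e) = f' (h @ e)) \<Longrightarrow> Eh P h n f = Eh P h n f'"
  unfolding Eh_def by (rule sum.cong) auto

lemma Eh_add: "Eh P h n (\<lambda>k. f k + f' k) = Eh P h n f + Eh P h n f'"
  unfolding Eh_def by (simp add: distrib_left sum.distrib)

lemma Eh_cmult: "Eh P h n (\<lambda>k. c * f k) = c * Eh P h n f"
  unfolding Eh_def by (simp add: sum_distrib_left mult.left_commute)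

lemma Eh_sum: "Eh P h n (\<lambda>k. \<Sum>i\<in>I. f i k) = (\<Sum>i\<in>I. Eh P h n (f i))"
  unfolding Eh_def by (simp add: sum_distrib_left sum.swap[of _ I])

context
  fixes P :: "'s::finite \<Rightarrow> 's \<Rightarrow> real"
  assumes Pnn: "\<forall>s s'. 0 \<le> P s s'" and Psum: "\<forall>s. (\<Sum>s'\<in>UNIV. P s s') = 1"
begin

lemma Eh_mono:
  assumes "\<And>e. length e = n \<Longrightarrow> f (h @ e) \<le> f' (h @ e)"
  shows "Eh P h n f \<le> Eh P h n f'"
  unfolding Eh_def
  by (rule sum_mono) (auto intro!: mult_left_mono assms prob_path_nonneg Pnn)

lemma Eh_const: "Eh P h n (\<lambda>_. c) = c"
  unfolding Eh_def by (simp add: sum_distrib_right[symmetric] sum_prob_path[OF Psum])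

lemma Eh_le_const: "(\<And>e. length e = n \<Longrightarrow> f (h @ e) \<le> c) \<Longrightarrow> Eh P h n f \<le> c"
  using Eh_mono[of n f h "\<lambda>_. c"] Eh_const by simp

lemma Eh_ge_const: "(\<And>e. length e = n \<Longrightarrow> c \<le> f (h @ e)) \<Longrightarrow> c \<le> Eh P h n f"
  using Eh_mono[of n "\<lambda>_. c" h f] Eh_const by simp

lemma Eh_abs: "(\<And>e. length e = n \<Longrightarrow> \<bar>f (h @ e)\<bar> \<le> M) \<Longrightarrow> \<bar>Eh P h n f\<bar> \<le> M"
proof -
  assume a: "\<And>e. length e = n \<Longrightarrow> \<bar>f (h @ e)\<bar> \<le> M"
  have "Eh P h n f \<le> M" by (rule Eh_le_const) (use a in force)
  moreover have "- M \<le> Eh P h n f" by (rule Eh_ge_const) (use a in force)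
  ultimately show ?thesis by simp
qed

context fixes \<beta> :: real assumes b0: "0 < \<beta>" and b1: "\<beta> < 1"
begin

lemma disc_summable:
  assumes "\<And>e. \<bar>f (h @ e)\<bar> \<le> M"
  shows "summable (\<lambda>n. \<beta> ^ n * Eh P h n f)"
proof (rule summable_comparison_test'[where g = "\<lambda>n. M * \<beta> ^ n" and N = 0])
  show "summable (\<lambda>n. M * \<beta> ^ n)" using b0 b1 by (intro summable_mult summable_geometric) auto
  fix n
  have "\<bar>Eh P h n f\<bar> \<le> M" by (rule Eh_abs) (rule assms)
  then show "norm (\<beta> ^ n * Eh P h n f) \<le> M * \<beta> ^ n"
    using b0 by (simp add: abs_mult mult.commute mult_left_mono)
qed

lemma disc_abs:
  assumes "\<And>e. \<bar>f (h @ e)\<bar> \<le> M"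
  shows "\<bar>disc \<beta> P h f\<bar> \<le> M / (1 - \<beta>)"
proof -
  have s: "summable (\<lambda>n. \<beta> ^ n * Eh P h n f)" by (rule disc_summable) (rule assms)
  have sg: "summable (\<lambda>n. M * \<beta> ^ n)" using b0 b1 by (intro summable_mult summable_geometric) auto
  have "\<bar>\<beta> ^ n * Eh P h n f\<bar> \<le> M * \<beta> ^ n" for n
  proof -
    have "\<bar>Eh P h n f\<bar> \<le> M" by (rule Eh_abs) (rule assms)
    then show ?thesis using b0 by (simp add: abs_mult mult.commute mult_left_mono)
  qed
  note ab = this
  have le1: "\<beta> ^ n * Eh P h n f \<le> M * \<beta> ^ n" and le2: "- (M * \<beta> ^ n) \<le> \<beta> ^ n * Eh P h n f" for n
    using ab[of n] by (simp_all add: abs_le_iff)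
  have "disc \<beta> P h f \<le> (\<Sum>n. M * \<beta> ^ n)"
    unfolding disc_def by (rule suminf_le[OF le1 s sg])
  moreover have "(\<Sum>n. - (M * \<beta> ^ n)) \<le> disc \<beta> P h f"
    unfolding disc_def by (rule suminf_le[OF le2 summable_minus[OF sg] s])
  moreover have "(\<Sum>n. - (M * \<beta> ^ n)) = - (\<Sum>n. M * \<beta> ^ n)"
    by (rule suminf_minus[OF sg])
  moreover have "(\<Sum>n. M * \<beta> ^ n) = M / (1 - \<beta>)"
    using b0 b1 by (simp add: suminf_mult suminf_geometric)
  ultimately show ?thesis by simp
qed

lemma disc_head:
  assumes "\<And>e. \<bar>f (s # e)\<bar> \<le> M"
  shows "disc \<beta> P [s] f = f [s] + \<beta> * (\<Sum>s1\<in>UNIV. P s s1 * disc \<beta> P [s1] (\<lambda>h. f (s # h)))"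
proof -
  have s: "summable (\<lambda>n. \<beta> ^ n * Eh P [s] n f)" by (rule disc_summable[of f "[s]" M]) (simp add: assms)
  have s1: "summable (\<lambda>n. \<beta> ^ n * Eh P [s1] n (\<lambda>h. f (s # h)))" for s1
    by (rule disc_summable[of _ _ M]) (simp add: assms)
  have "disc \<beta> P [s] f = f [s] + (\<Sum>n. \<beta> ^ Suc n * Eh P [s] (Suc n) f)"
    unfolding disc_def using suminf_split_head[OF s] by (simp add: Eh_0)
  also have "(\<Sum>n. \<beta> ^ Suc n * Eh P [s] (Suc n) f)
      = (\<Sum>n. \<beta> * (\<Sum>s1\<in>UNIV. P s s1 * (\<beta> ^ n * Eh P [s1] n (\<lambda>h. f (s # h)))))"
  proof (rule arg_cong[where f = suminf], rule ext)
    fix n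
    have "(\<Sum>s1\<in>UNIV. P s s1 * (\<beta> ^ n * Eh P [s1] n (\<lambda>h. f (s # h))))
        = \<beta> ^ n * (\<Sum>s1\<in>UNIV. P s s1 * Eh P [s1] n (\<lambda>h. f (s # h)))"
      by (simp add: sum_distrib_left mult.left_commute)
    then show "\<beta> ^ Suc n * Eh P [s] (Suc n) f
        = \<beta> * (\<Sum>s1\<in>UNIV. P s s1 * (\<beta> ^ n * Eh P [s1] n (\<lambda>h. f (s # h))))"
      by (simp add: Eh_Suc_single)
  qed
  also have "\<dots> = \<beta> * (\<Sum>s1\<in>UNIV. P s s1 * disc \<beta> P [s1] (\<lambda>h. f (s # h)))"
  proof -
    have "(\<Sum>n. \<Sum>s1\<in>UNIV. P s s1 * (\<beta> ^ n * Eh P [s1] n (\<lambda>h. f (s # h))))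
       = (\<Sum>s1\<in>UNIV. \<Sum>n. P s s1 * (\<beta> ^ n * Eh P [s1] n (\<lambda>h. f (s # h))))"
      by (rule suminf_sum, rule summable_mult, rule s1)
    also have "\<dots> = (\<Sum>s1\<in>UNIV. P s s1 * disc \<beta> P [s1] (\<lambda>h. f (s # h)))"
      unfolding disc_def by (rule sum.cong[OF refl], rule suminf_mult, rule s1)
    finally have eq: "(\<Sum>n. \<Sum>s1\<in>UNIV. P s s1 * (\<beta> ^ n * Eh P [s1] n (\<lambda>h. f (s # h))))
       = (\<Sum>s1\<in>UNIV. P s s1 * disc \<beta> P [s1] (\<lambda>h. f (s # h)))" .
    have sm: "summable (\<lambda>n. \<Sum>s1\<in>UNIV. P s s1 * (\<beta> ^ n * Eh P [s1] n (\<lambda>h. f (s # h))))"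
      by (rule summable_sum, rule summable_mult, rule s1)
    show ?thesis by (simp only: suminf_mult[OF sm] eq)
  qed
  finally show ?thesis .
qed

end
end

lemma disc_cong:
  assumes "\<And>e. f (h @ e) = f' (h @ e)"
  shows "disc \<beta> P h f = disc \<beta> P h f'"
proof -
  have "Eh P h n f = Eh P h n f'" for n by (rule Eh_cong) (rule assms)
  then show ?thesis by (simp add: disc_def)
qed

lemma xst_shift:
  "xst \<zeta> a x (s # h) (Suc k) = xst \<zeta> (\<lambda>h. a (s # h)) (\<zeta> x (a [s]) s) h k"
  by (induction k) auto

lemma stateof_shift:
  "h \<noteq> [] \<Longrightarrow> stateof \<zeta> a x (s # h) = stateof \<zeta> (\<lambda>h. a (s # h)) (\<zeta> x (a [s]) s) h"
  unfolding stateof_def using xst_shift[of \<zeta> a x s h "length h - 1"] by simp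

lemma stateof_single: "stateof \<zeta> a x [s] = x"
  by (simp add: stateof_def)

lemma histgen_single: "histgen a [s] = ([], s)"
  by (simp add: histgen_def)

lemma histgen_shift:
  assumes "h \<noteq> []"
  shows "histgen a (s # h) = ((s, a [s]) # fst (histgen (\<lambda>h. a (s # h)) h), snd (histgen (\<lambda>h. a (s # h)) h))"
proof -
  have l: "length h = Suc (length h - 1)" using assms by simp
  have "[0..<length h] = 0 # map Suc [0..<length h - 1]"
  proof -
    have "[0..<Suc m] = 0 # map Suc [0..<m]" for m by (simp add: map_Suc_upt upt_conv_Cons)
    then show ?thesis by (subst l) simp
  qed
  then show ?thesis using assms unfolding histgen_def by simp
qed

lemma shocks_histgen: "h \<noteq> [] \<Longrightarrow> shocks (histgen a h) = h"
proof -
  assume h: "h \<noteq> []"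
  have "map (\<lambda>j. h ! j) [0..<length h - 1] = butlast h"
    by (rule nth_equalityI) (auto simp: nth_butlast)
  then show ?thesis unfolding shocks_def histgen_def using h by (simp add: comp_def)
qed

lemma xst_cong:
  "(\<And>k'. k' < k \<Longrightarrow> a (take (Suc k') h) = b (take (Suc k') h)) \<Longrightarrow> xst \<zeta> a x h k = xst \<zeta> b x h k"
  by (induction k) auto

lemma stateof_cong_hd:
  assumes "h \<noteq> []" and "\<And>h'. h' \<noteq> [] \<Longrightarrow> hd h' = hd h \<Longrightarrow> a h' = b h'"
  shows "stateof \<zeta> a x h = stateof \<zeta> b x h"
  unfolding stateof_def using assms by (intro xst_cong) auto

lemma histgen_cong_hd:
  assumes "h \<noteq> []" and "\<And>h'. h' \<noteq> [] \<Longrightarrow> hd h' = hd h \<Longrightarrow> a h' = b h'"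
  shows "histgen a h = histgen b h"
  unfolding histgen_def using assms by auto

lemma xst_in:
  assumes "h \<noteq> []" "\<And>h'. h' \<noteq> [] \<Longrightarrow> a h' \<in> A" "x \<in> X" "\<forall>x\<in>X. \<forall>a\<in>A. \<forall>s. \<zeta> x a s \<in> X"
  shows "xst \<zeta> a x h k \<in> X"
  using assms by (induction k) auto

lemma stateof_in:
  assumes "h \<noteq> []" "\<And>h'. h' \<noteq> [] \<Longrightarrow> a h' \<in> A" "x \<in> X" "\<forall>x\<in>X. \<forall>a\<in>A. \<forall>s. \<zeta> x a s \<in> X"
  shows "stateof \<zeta> a x h \<in> X"
  unfolding stateof_def by (rule xst_in[OF assms])

lemma finite_Hset: "finite A \<Longrightarrow> finite (Hset A t :: (('s::finite \<times> 'a) list \<times> 's) set)"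
proof -
  assume fA: "finite A"
  have "Hset A t \<subseteq> {q. set q \<subseteq> (UNIV :: 's set) \<times> A \<and> length q = t} \<times> UNIV"
    by (auto simp: Hset_def)
  moreover have "finite ({q. set q \<subseteq> (UNIV :: 's set) \<times> A \<and> length q = t} \<times> (UNIV :: 's set))"
    using fA by (intro finite_cartesian_product finite_lists_length_eq) auto
  ultimately show ?thesis by (rule finite_subset)
qed

lemma histgen_Hset:
  assumes "\<And>h'. h' \<noteq> [] \<Longrightarrow> a h' \<in> A"
  shows "histgen a (s0 # e) \<in> Hset A (length e)"
  unfolding histgen_def Hset_def using assms by auto

lemma histprob_cons: "histprob P s0 (s0 # e) = prob_path P s0 e"
  by (simp add: histprob_def)

locale dp =
  fixes A :: "'a set" and X :: "'x set" and P :: "'s::finite \<Rightarrow> 's \<Rightarrow> real"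
    and \<zeta> :: "'x \<Rightarrow> 'a \<Rightarrow> 's \<Rightarrow> 'x" and p r :: "'x \<Rightarrow> 'a \<Rightarrow> 's \<Rightarrow> real"
    and g :: "'i::finite \<Rightarrow> 'x \<Rightarrow> 'a \<Rightarrow> 's \<Rightarrow> real" and gbar :: "'i \<Rightarrow> real"
    and \<beta> :: real and Br Bg :: real
  assumes finA: "finite A" and Ppos: "\<forall>s s'. 0 < P s s'" and Psum: "\<forall>s. (\<Sum>s'\<in>UNIV. P s s') = 1"
    and \<zeta>X: "\<forall>x\<in>X. \<forall>a\<in>A. \<forall>s. \<zeta> x a s \<in> X"
    and rB: "\<And>x a s. x \<in> X \<Longrightarrow> a \<in> A \<Longrightarrow> \<bar>r x a s\<bar> \<le> Br"
    and gB: "\<And>i x a s. x \<in> X \<Longrightarrow> a \<in> A \<Longrightarrow> \<bar>g i x a s\<bar> \<le> Bg"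
    and Br0: "0 \<le> Br" and Bg0: "0 \<le> Bg"
    and b0: "0 < \<beta>" and b1: "\<beta> < 1"
    and feas: "\<forall>x0\<in>X. \<forall>s0. \<exists>a. feasible A p \<zeta> g gbar \<beta> P x0 s0 a"
begin

lemma Pnn: "\<forall>s s'. 0 \<le> P s s'" using Ppos by (simp add: less_imp_le)

lemma Ple1: "P s s' \<le> 1"
proof -
  have "P s s' \<le> (\<Sum>s'\<in>UNIV. P s s')" by (rule member_le_sum) (use Pnn in auto)
  then show ?thesis using Psum by simp
qed

definition G where "G i a x0 h = g i (stateof \<zeta> a x0 h) (a h) (last h)"

definition Fp where "Fp a l \<gamma> x0 h = r (stateof \<zeta> a x0 h) (a h) (last h)
   + (\<Sum>i\<in>UNIV. \<gamma> i * G i a x0 h)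
   + (\<Sum>i\<in>UNIV. l (histgen a h) i * (disc \<beta> P h (G i a x0) - gbar i))"

definition LT where "LT l s0 t = (\<Sum>h\<in>Hset A t. \<Sum>i\<in>UNIV. \<beta> ^ t * l h i * histprob P s0 (shocks h))"

abbreviation "PL x0 \<equiv> plans A p \<zeta> x0"
abbreviation "Lm s0 \<equiv> Lam A \<beta> P s0"
abbreviation "LG a l \<gamma> x0 s0 \<equiv> Lag r g gbar \<zeta> \<beta> P a l \<gamma> x0 s0"

definition K0 where "K0 \<gamma> = Br + (\<Sum>i\<in>UNIV. \<bar>\<gamma> i\<bar>) * Bg"
definition Cg where "Cg = Bg / (1 - \<beta>) + (\<Sum>i\<in>UNIV. \<bar>gbar i\<bar>)"

lemma Cg0: "0 \<le> Cg" unfolding Cg_def using Bg0 b1 by (auto intro!: add_nonneg_nonneg sum_nonneg)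
lemma K00: "0 \<le> K0 \<gamma>" unfolding K0_def using Bg0 Br0 by (auto intro!: add_nonneg_nonneg sum_nonneg mult_nonneg_nonneg)

lemma Lag_eq: "LG a l \<gamma> x0 s0 = (\<Sum>t. \<beta> ^ t * Eh P [s0] t (Fp a l \<gamma> x0))"
  unfolding Lag_def Fp_def G_def ..

lemma Lam_nonneg: "l \<in> Lm s0 \<Longrightarrow> 0 \<le> l h i" by (cases h) (auto simp: Lam_def)

lemma bge: "0 \<le> \<beta>" using b0 by simp

lemma Eh_uminus: "Eh P h n (\<lambda>k. - f k) = - Eh P h n f"
  unfolding Eh_def by (simp add: sum_negf)
lemma Lam_summable: "l \<in> Lm s0 \<Longrightarrow> summable (LT l s0)"
  by (simp add: Lam_def LT_def[abs_def])

lemma plan_A: "a \<in> PL x0 \<Longrightarrow> h \<noteq> [] \<Longrightarrow> a h \<in> A" by (simp add: plans_def)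
lemma plan_p: "a \<in> PL x0 \<Longrightarrow> h \<noteq> [] \<Longrightarrow> 0 \<le> p (stateof \<zeta> a x0 h) (a h) (last h)" by (simp add: plans_def)

lemma stateof_X: "a \<in> PL x0 \<Longrightarrow> x0 \<in> X \<Longrightarrow> h \<noteq> [] \<Longrightarrow> stateof \<zeta> a x0 h \<in> X"
  by (rule stateof_in[where A = A]) (auto simp: plan_A \<zeta>X)

lemma G_bound: "a \<in> PL x0 \<Longrightarrow> x0 \<in> X \<Longrightarrow> h \<noteq> [] \<Longrightarrow> \<bar>G i a x0 h\<bar> \<le> Bg"
  unfolding G_def by (intro gB stateof_X plan_A)

lemma disc_G_bound:
  assumes "a \<in> PL x0" "x0 \<in> X" "h \<noteq> []"
  shows "\<bar>disc \<beta> P h (G i a x0)\<bar> \<le> Bg / (1 - \<beta>)"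
  by (rule disc_abs[OF Pnn Psum b0 b1]) (rule G_bound[OF assms(1,2)], use assms(3) in simp)

lemma Eh_abs_le:
  assumes "\<And>e. length e = n \<Longrightarrow> \<bar>f (h @ e)\<bar> \<le> f' (h @ e)"
  shows "\<bar>Eh P h n f\<bar> \<le> Eh P h n f'"
proof -
  have "Eh P h n f \<le> Eh P h n f'" by (rule Eh_mono[OF Pnn Psum]) (use assms in force)
  moreover have "Eh P h n (\<lambda>k. - f k) \<le> Eh P h n f'" by (rule Eh_mono[OF Pnn Psum]) (use assms in force)
  ultimately show ?thesis by (simp add: Eh_uminus)
qed

lemma Fp_abs:
  assumes "a \<in> PL x0" "x0 \<in> X" "h \<noteq> []" "\<forall>h i. 0 \<le> l h i"
  shows "\<bar>Fp a l \<gamma> x0 h\<bar> \<le> K0 \<gamma> + Cg * (\<Sum>i\<in>UNIV. l (histgen a h) i)"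
proof -
  have r: "\<bar>r (stateof \<zeta> a x0 h) (a h) (last h)\<bar> \<le> Br" by (rule rB[OF stateof_X[OF assms(1-3)] plan_A[OF assms(1,3)]])
  have "\<bar>\<Sum>i\<in>UNIV. \<gamma> i * G i a x0 h\<bar> \<le> (\<Sum>i\<in>UNIV. \<bar>\<gamma> i * G i a x0 h\<bar>)" by (rule sum_abs)
  also have "\<dots> \<le> (\<Sum>i\<in>UNIV. \<bar>\<gamma> i\<bar> * Bg)"
    by (rule sum_mono) (simp add: abs_mult mult_left_mono G_bound[OF assms(1-3)])
  finally have gg: "\<bar>\<Sum>i\<in>UNIV. \<gamma> i * G i a x0 h\<bar> \<le> (\<Sum>i\<in>UNIV. \<bar>\<gamma> i\<bar>) * Bg" by (simp add: sum_distrib_right)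
  have "\<bar>\<Sum>i\<in>UNIV. l (histgen a h) i * (disc \<beta> P h (G i a x0) - gbar i)\<bar>
      \<le> (\<Sum>i\<in>UNIV. \<bar>l (histgen a h) i * (disc \<beta> P h (G i a x0) - gbar i)\<bar>)" by (rule sum_abs)
  also have "\<dots> \<le> (\<Sum>i\<in>UNIV. l (histgen a h) i * Cg)"
  proof (rule sum_mono)
    fix i :: 'i
    have "\<bar>gbar i\<bar> \<le> (\<Sum>i\<in>UNIV. \<bar>gbar i\<bar>)" by (rule member_le_sum) auto
    then have "\<bar>disc \<beta> P h (G i a x0) - gbar i\<bar> \<le> Cg"
      using disc_G_bound[OF assms(1-3), of i] unfolding Cg_def by linarith
    then show "\<bar>l (histgen a h) i * (disc \<beta> P h (G i a x0) - gbar i)\<bar> \<le> l (histgen a h) i * Cg"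
    proof -
      have nn: "0 \<le> l (histgen a h) i" using assms(4) by blast
      show ?thesis using mult_left_mono[OF \<open>\<bar>disc \<beta> P h (G i a x0) - gbar i\<bar> \<le> Cg\<close> nn]
        by (simp add: abs_mult abs_of_nonneg[OF nn])
    qed
  qed
  finally have ll: "\<bar>\<Sum>i\<in>UNIV. l (histgen a h) i * (disc \<beta> P h (G i a x0) - gbar i)\<bar>
      \<le> Cg * (\<Sum>i\<in>UNIV. l (histgen a h) i)" by (simp add: sum_distrib_left mult.commute)
  show ?thesis unfolding Fp_def K0_def using r gg ll by linarith
qed

lemma LT_nonneg: "\<forall>h i. 0 \<le> l h i \<Longrightarrow> 0 \<le> LT l s0 t"
  unfolding LT_def histprob_def
  by (intro sum_nonneg) (auto intro!: mult_nonneg_nonneg prob_path_nonneg Pnn zero_le_power bge)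

lemma Eh_lsum_le:
  assumes "\<And>h'. h' \<noteq> [] \<Longrightarrow> a h' \<in> A" "\<forall>h i. 0 \<le> l h i"
  shows "\<beta> ^ t * Eh P [s0] t (\<lambda>h. \<Sum>i\<in>UNIV. l (histgen a h) i) \<le> LT l s0 t"
proof -
  define \<psi> where "\<psi> h = (\<Sum>i\<in>UNIV. \<beta> ^ t * l h i * histprob P s0 (shocks h))" for h
  define \<iota> where "\<iota> e = histgen a (s0 # e)" for e
  have "\<beta> ^ t * Eh P [s0] t (\<lambda>h. \<Sum>i\<in>UNIV. l (histgen a h) i)
      = (\<Sum>e\<in>{e. length e = t}. \<psi> (\<iota> e))"
    unfolding Eh_def \<psi>_def \<iota>_def
    by (simp add: shocks_histgen histprob_cons sum_distrib_left sum_distrib_right mult_ac)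
  also have "\<dots> = (\<Sum>h\<in>\<iota> ` {e. length e = t}. \<psi> h)"
  proof (rule sum.reindex[symmetric, unfolded comp_def])
    show "inj_on \<iota> {e. length e = t}"
    proof (rule inj_onI)
      fix e e' assume "\<iota> e = \<iota> e'"
      then have "shocks (\<iota> e) = shocks (\<iota> e')" by simp
      then show "e = e'" unfolding \<iota>_def by (simp add: shocks_histgen)
    qed
  qed
  also have "\<dots> \<le> (\<Sum>h\<in>Hset A t. \<psi> h)"
  proof (rule sum_mono2[OF finite_Hset[OF finA]])
    show "\<iota> ` {e. length e = t} \<subseteq> Hset A t" unfolding \<iota>_def using histgen_Hset[OF assms(1)] by auto
    have lnn: "\<And>h i. 0 \<le> l h i" using assms(2) by blast
    show "0 \<le> \<psi> h" for h unfolding \<psi>_def histprob_def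
      by (intro sum_nonneg) (auto intro!: mult_nonneg_nonneg prob_path_nonneg Pnn zero_le_power bge lnn)
  qed
  finally show ?thesis unfolding LT_def \<psi>_def .
qed

lemma Lag_term_bound:
  assumes "a \<in> PL x0" "x0 \<in> X" "l \<in> Lm s0"
  shows "\<bar>\<beta> ^ t * Eh P [s0] t (Fp a l \<gamma> x0)\<bar> \<le> K0 \<gamma> * \<beta> ^ t + Cg * LT l s0 t"
proof -
  have ln: "\<forall>h i. 0 \<le> l h i" using assms(3) by (simp add: Lam_nonneg)
  have "\<bar>Eh P [s0] t (Fp a l \<gamma> x0)\<bar> \<le> Eh P [s0] t (\<lambda>h. K0 \<gamma> + Cg * (\<Sum>i\<in>UNIV. l (histgen a h) i))"
    by (rule Eh_abs_le) (rule Fp_abs[OF assms(1,2) _ ln], simp)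
  also have "\<dots> = K0 \<gamma> + Cg * Eh P [s0] t (\<lambda>h. \<Sum>i\<in>UNIV. l (histgen a h) i)"
    by (simp add: Eh_add Eh_cmult Eh_const[OF Pnn Psum])
  finally have "\<bar>\<beta> ^ t * Eh P [s0] t (Fp a l \<gamma> x0)\<bar> \<le> \<beta> ^ t * (K0 \<gamma> + Cg * Eh P [s0] t (\<lambda>h. \<Sum>i\<in>UNIV. l (histgen a h) i))"
    using b0 by (simp add: abs_mult mult_left_mono)
  also have "\<dots> = K0 \<gamma> * \<beta> ^ t + Cg * (\<beta> ^ t * Eh P [s0] t (\<lambda>h. \<Sum>i\<in>UNIV. l (histgen a h) i))"
    by (simp add: algebra_simps)
  also have "\<dots> \<le> K0 \<gamma> * \<beta> ^ t + Cg * LT l s0 t"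
    using Eh_lsum_le[OF plan_A[OF assms(1)] ln] Cg0 by (simp add: mult_left_mono)
  finally show ?thesis .
qed

lemma geo_summable: "summable (\<lambda>t. c * \<beta> ^ t)"
  using b0 b1 by (intro summable_mult summable_geometric) auto

lemma geo_sum: "(\<Sum>t. c * \<beta> ^ t) = c / (1 - \<beta>)"
  using b0 b1 by (simp add: suminf_mult suminf_geometric)

lemma Lag_summable:
  assumes "a \<in> PL x0" "x0 \<in> X" "l \<in> Lm s0"
  shows "summable (\<lambda>t. \<beta> ^ t * Eh P [s0] t (Fp a l \<gamma> x0))"
  by (rule summable_comparison_test'[where N = 0 and g = "\<lambda>t. K0 \<gamma> * \<beta> ^ t + Cg * LT l s0 t",
        OF summable_add[OF geo_summable summable_mult[OF Lam_summable[OF assms(3)]]]])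
     (simp add: Lag_term_bound[OF assms])

lemma Lag_upper:
  assumes "a \<in> PL x0" "x0 \<in> X" "l \<in> Lm s0"
  shows "LG a l \<gamma> x0 s0 \<le> K0 \<gamma> / (1 - \<beta>) + Cg * suminf (LT l s0)"
proof -
  have s2: "summable (\<lambda>t. K0 \<gamma> * \<beta> ^ t + Cg * LT l s0 t)"
    by (rule summable_add[OF geo_summable summable_mult[OF Lam_summable[OF assms(3)]]])
  have "LG a l \<gamma> x0 s0 \<le> (\<Sum>t. K0 \<gamma> * \<beta> ^ t + Cg * LT l s0 t)"
    unfolding Lag_eq
    by (rule suminf_le[OF _ Lag_summable[OF assms] s2]) (rule abs_le_D1[OF Lag_term_bound[OF assms]])
  also have "\<dots> = K0 \<gamma> / (1 - \<beta>) + Cg * suminf (LT l s0)"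
    by (simp add: suminf_add[OF geo_summable summable_mult[OF Lam_summable[OF assms(3)]], symmetric]
        geo_sum suminf_mult[OF Lam_summable[OF assms(3)]])
  finally show ?thesis .
qed

lemma feasible_plan: "feasible A p \<zeta> g gbar \<beta> P x0 s0 a \<Longrightarrow> a \<in> PL x0"
  by (simp add: feasible_def)

lemma Lag_lower:
  assumes "feasible A p \<zeta> g gbar \<beta> P x0 s0 a" "x0 \<in> X" "l \<in> Lm s0"
  shows "- K0 \<gamma> / (1 - \<beta>) \<le> LG a l \<gamma> x0 s0"
proof -
  have a: "a \<in> PL x0" by (rule feasible_plan[OF assms(1)])
  have ln: "\<forall>h i. 0 \<le> l h i" using assms(3) by (simp add: Lam_nonneg)
  have Fl: "- K0 \<gamma> \<le> Fp a l \<gamma> x0 (s0 # e)" for e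
  proof -
    have h: "s0 # e \<noteq> []" by simp
    have r: "\<bar>r (stateof \<zeta> a x0 (s0 # e)) (a (s0 # e)) (last (s0 # e))\<bar> \<le> Br"
      by (rule rB[OF stateof_X[OF a assms(2) h] plan_A[OF a h]])
    have "\<bar>\<Sum>i\<in>UNIV. \<gamma> i * G i a x0 (s0 # e)\<bar> \<le> (\<Sum>i\<in>UNIV. \<bar>\<gamma> i * G i a x0 (s0 # e)\<bar>)" by (rule sum_abs)
    also have "\<dots> \<le> (\<Sum>i\<in>UNIV. \<bar>\<gamma> i\<bar> * Bg)"
      by (rule sum_mono) (simp add: abs_mult mult_left_mono G_bound[OF a assms(2) h])
    finally have gg: "\<bar>\<Sum>i\<in>UNIV. \<gamma> i * G i a x0 (s0 # e)\<bar> \<le> (\<Sum>i\<in>UNIV. \<bar>\<gamma> i\<bar>) * Bg" by (simp add: sum_distrib_right)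
    have "0 \<le> (\<Sum>i\<in>UNIV. l (histgen a (s0 # e)) i * (disc \<beta> P (s0 # e) (G i a x0) - gbar i))"
    proof (rule sum_nonneg)
      fix i
      have "gbar i \<le> disc \<beta> P (s0 # e) (G i a x0)"
        using assms(1) unfolding feasible_def G_def by auto
      moreover have "0 \<le> l (histgen a (s0 # e)) i" using ln by blast
      ultimately show "0 \<le> l (histgen a (s0 # e)) i * (disc \<beta> P (s0 # e) (G i a x0) - gbar i)"
        by simp
    qed
    then show ?thesis unfolding Fp_def K0_def using r gg by linarith
  qed
  have "(\<Sum>t. (- K0 \<gamma>) * \<beta> ^ t) \<le> LG a l \<gamma> x0 s0"
    unfolding Lag_eq
  proof (rule suminf_le[OF _ geo_summable Lag_summable[OF a assms(2,3)]])
    fix t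
    have "- K0 \<gamma> \<le> Eh P [s0] t (Fp a l \<gamma> x0)"
      by (rule Eh_ge_const[OF Pnn Psum]) (simp add: Fl)
    from mult_left_mono[OF this zero_le_power[OF bge, of t]]
    show "- K0 \<gamma> * \<beta> ^ t \<le> \<beta> ^ t * Eh P [s0] t (Fp a l \<gamma> x0)"
      by (simp add: mult.commute)
  qed
  then show ?thesis using geo_sum[of "- K0 \<gamma>"] by simp
qed

end

context dp begin

definition SL where "SL l \<gamma> x0 s0 = (SUP a\<in>PL x0. LG a l \<gamma> x0 s0)"
abbreviation "DV \<gamma> x0 s0 \<equiv> Dval A p r g gbar \<zeta> \<beta> P \<gamma> x0 s0"

lemma DV_eq: "DV \<gamma> x0 s0 = (INF l\<in>Lm s0. SL l \<gamma> x0 s0)"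
  unfolding Dval_def SL_def ..

lemma feas_ex: "x0 \<in> X \<Longrightarrow> \<exists>a. feasible A p \<zeta> g gbar \<beta> P x0 s0 a"
  using feas by blast

lemma PL_ne: "x0 \<in> X \<Longrightarrow> PL x0 \<noteq> {}"
  using feas_ex feasible_plan by blast

lemma SL_bdd: "x0 \<in> X \<Longrightarrow> l \<in> Lm s0 \<Longrightarrow> bdd_above ((\<lambda>a. LG a l \<gamma> x0 s0) ` PL x0)"
  by (rule bdd_aboveI2[where M = "K0 \<gamma> / (1 - \<beta>) + Cg * suminf (LT l s0)"]) (rule Lag_upper)

lemma SL_ge: "x0 \<in> X \<Longrightarrow> l \<in> Lm s0 \<Longrightarrow> a \<in> PL x0 \<Longrightarrow> LG a l \<gamma> x0 s0 \<le> SL l \<gamma> x0 s0"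
  unfolding SL_def by (rule cSUP_upper[OF _ SL_bdd])

lemma SL_lower: "x0 \<in> X \<Longrightarrow> l \<in> Lm s0 \<Longrightarrow> - K0 \<gamma> / (1 - \<beta>) \<le> SL l \<gamma> x0 s0"
proof -
  assume x0: "x0 \<in> X" and l: "l \<in> Lm s0"
  obtain a where a: "feasible A p \<zeta> g gbar \<beta> P x0 s0 a" using feas_ex[OF x0] by blast
  have "- K0 \<gamma> / (1 - \<beta>) \<le> LG a l \<gamma> x0 s0" by (rule Lag_lower[OF a x0 l])
  also have "\<dots> \<le> SL l \<gamma> x0 s0" by (rule SL_ge[OF x0 l feasible_plan[OF a]])
  finally show ?thesis .
qed

lemma SL_least: "x0 \<in> X \<Longrightarrow> (\<And>a. a \<in> PL x0 \<Longrightarrow> LG a l \<gamma> x0 s0 \<le> c) \<Longrightarrow> SL l \<gamma> x0 s0 \<le> c"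
  unfolding SL_def by (rule cSUP_least[OF PL_ne])

lemma SL_approx:
  assumes "x0 \<in> X" "l \<in> Lm s0" "0 < \<epsilon>"
  shows "\<exists>a\<in>PL x0. SL l \<gamma> x0 s0 - \<epsilon> < LG a l \<gamma> x0 s0"
proof -
  have "SL l \<gamma> x0 s0 - \<epsilon> < Sup ((\<lambda>a. LG a l \<gamma> x0 s0) ` PL x0)" using assms(3) unfolding SL_def by simp
  from less_cSupD[OF _ this] PL_ne[OF assms(1)] show ?thesis by blast
qed

lemma Lam_zero: "(\<lambda>h i. 0) \<in> Lm s0"
  by (simp add: Lam_def)

lemma DV_bdd: "x0 \<in> X \<Longrightarrow> bdd_below ((\<lambda>l. SL l \<gamma> x0 s0) ` Lm s0)"
  by (rule bdd_belowI2[where m = "- K0 \<gamma> / (1 - \<beta>)"]) (rule SL_lower)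

lemma DV_le: "x0 \<in> X \<Longrightarrow> l \<in> Lm s0 \<Longrightarrow> DV \<gamma> x0 s0 \<le> SL l \<gamma> x0 s0"
  unfolding DV_eq by (rule cINF_lower[OF DV_bdd])

lemma DV_lower: "x0 \<in> X \<Longrightarrow> - K0 \<gamma> / (1 - \<beta>) \<le> DV \<gamma> x0 s0"
  unfolding DV_eq using Lam_zero by (intro cINF_greatest SL_lower) auto

lemma DV_approx:
  assumes "x0 \<in> X" "0 < \<epsilon>"
  shows "\<exists>l\<in>Lm s0. SL l \<gamma> x0 s0 < DV \<gamma> x0 s0 + \<epsilon>"
proof -
  have "Inf ((\<lambda>l. SL l \<gamma> x0 s0) ` Lm s0) < DV \<gamma> x0 s0 + \<epsilon>" using assms(2) unfolding DV_eq by simp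
  from cInf_lessD[OF _ this] Lam_zero show ?thesis by blast
qed

end

context dp begin

lemma series_head:
  assumes s1: "\<And>s1. summable (\<lambda>n. \<beta> ^ n * Eh P [s1] n (\<lambda>h. f (s # h)))"
    and s: "summable (\<lambda>n. \<beta> ^ n * Eh P [s] n f)"
  shows "(\<Sum>n. \<beta> ^ n * Eh P [s] n f) = f [s] + \<beta> * (\<Sum>s1\<in>UNIV. P s s1 * (\<Sum>n. \<beta> ^ n * Eh P [s1] n (\<lambda>h. f (s # h))))"
proof -
  have "(\<Sum>n. \<beta> ^ n * Eh P [s] n f) = f [s] + (\<Sum>n. \<beta> ^ Suc n * Eh P [s] (Suc n) f)"
    using suminf_split_head[OF s] by (simp add: Eh_0)
  also have "(\<Sum>n. \<beta> ^ Suc n * Eh P [s] (Suc n) f)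
      = (\<Sum>n. \<beta> * (\<Sum>s1\<in>UNIV. P s s1 * (\<beta> ^ n * Eh P [s1] n (\<lambda>h. f (s # h)))))"
  proof (rule arg_cong[where f = suminf], rule ext)
    fix n
    have "(\<Sum>s1\<in>UNIV. P s s1 * (\<beta> ^ n * Eh P [s1] n (\<lambda>h. f (s # h))))
        = \<beta> ^ n * (\<Sum>s1\<in>UNIV. P s s1 * Eh P [s1] n (\<lambda>h. f (s # h)))"
      by (simp add: sum_distrib_left mult.left_commute)
    then show "\<beta> ^ Suc n * Eh P [s] (Suc n) f
        = \<beta> * (\<Sum>s1\<in>UNIV. P s s1 * (\<beta> ^ n * Eh P [s1] n (\<lambda>h. f (s # h))))"
      by (simp add: Eh_Suc_single)
  qed
  also have "\<dots> = \<beta> * (\<Sum>s1\<in>UNIV. P s s1 * (\<Sum>n. \<beta> ^ n * Eh P [s1] n (\<lambda>h. f (s # h))))"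
  proof -
    have "(\<Sum>n. \<Sum>s1\<in>UNIV. P s s1 * (\<beta> ^ n * Eh P [s1] n (\<lambda>h. f (s # h))))
       = (\<Sum>s1\<in>UNIV. \<Sum>n. P s s1 * (\<beta> ^ n * Eh P [s1] n (\<lambda>h. f (s # h))))"
      by (rule suminf_sum, rule summable_mult, rule s1)
    also have "\<dots> = (\<Sum>s1\<in>UNIV. P s s1 * (\<Sum>n. \<beta> ^ n * Eh P [s1] n (\<lambda>h. f (s # h))))"
      by (rule sum.cong[OF refl], rule suminf_mult, rule s1)
    finally have eq: "(\<Sum>n. \<Sum>s1\<in>UNIV. P s s1 * (\<beta> ^ n * Eh P [s1] n (\<lambda>h. f (s # h))))
       = (\<Sum>s1\<in>UNIV. P s s1 * (\<Sum>n. \<beta> ^ n * Eh P [s1] n (\<lambda>h. f (s # h))))" .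
    have sm: "summable (\<lambda>n. \<Sum>s1\<in>UNIV. P s s1 * (\<beta> ^ n * Eh P [s1] n (\<lambda>h. f (s # h))))"
      by (rule summable_sum, rule summable_mult, rule s1)
    show ?thesis by (simp only: suminf_mult[OF sm] eq)
  qed
  finally show ?thesis .
qed

lemma disc_shift: "h \<noteq> [] \<Longrightarrow> disc \<beta> P (s # h) f = disc \<beta> P h (\<lambda>k. f (s # k))"
  unfolding disc_def Eh_def by simp

lemma G_shift: "h \<noteq> [] \<Longrightarrow> G i a x (s # h) = G i (\<lambda>k. a (s # k)) (\<zeta> x (a [s]) s) h"
  unfolding G_def by (simp add: stateof_shift)

lemma Fp_shift:
  assumes "h \<noteq> []"
  shows "Fp a l \<gamma> x (s # h) = Fp (\<lambda>k. a (s # k)) (\<lambda>q. l ((s, a [s]) # fst q, snd q)) \<gamma> (\<zeta> x (a [s]) s) h"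
proof -
  have d: "disc \<beta> P (s # h) (G i a x) = disc \<beta> P h (G i (\<lambda>k. a (s # k)) (\<zeta> x (a [s]) s))" for i
    unfolding disc_shift[OF assms] by (rule disc_cong) (simp add: G_shift assms)
  show ?thesis unfolding Fp_def d G_shift[OF assms] using assms
    by (simp add: stateof_shift histgen_shift)
qed

lemma Fp_single: "Fp a l \<gamma> x [s] = r x (a [s]) s + (\<Sum>i\<in>UNIV. \<gamma> i * g i x (a [s]) s)
   + (\<Sum>i\<in>UNIV. l ([], s) i * (disc \<beta> P [s] (G i a x) - gbar i))"
  unfolding Fp_def G_def by (simp add: stateof_single histgen_single)

lemma plan_shift: "a \<in> PL x \<Longrightarrow> (\<lambda>k. a (s # k)) \<in> PL (\<zeta> x (a [s]) s)"
proof -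
  assume a: "a \<in> PL x"
  have "0 \<le> p (stateof \<zeta> (\<lambda>k. a (s # k)) (\<zeta> x (a [s]) s) h) (a (s # h)) (last h)" if "h \<noteq> []" for h
    using plan_p[OF a, of "s # h"] that by (simp add: stateof_shift)
  then show ?thesis using a unfolding plans_def by auto
qed

lemma state_shift_X: "a \<in> PL x \<Longrightarrow> x \<in> X \<Longrightarrow> \<zeta> x (a [s]) s \<in> X"
  using \<zeta>X plan_A[of a x "[s]"] by auto

lemma disc_G_head:
  assumes "a \<in> PL x" "x \<in> X"
  shows "disc \<beta> P [s] (G i a x) = g i x (a [s]) s
     + \<beta> * (\<Sum>s1\<in>UNIV. P s s1 * disc \<beta> P [s1] (G i (\<lambda>k. a (s # k)) (\<zeta> x (a [s]) s)))"
proof -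
  have "disc \<beta> P [s] (G i a x) = G i a x [s] + \<beta> * (\<Sum>s1\<in>UNIV. P s s1 * disc \<beta> P [s1] (\<lambda>h. G i a x (s # h)))"
    by (rule disc_head[OF Pnn Psum b0 b1, of _ _ Bg]) (rule G_bound[OF assms], simp)
  moreover have "disc \<beta> P [s1] (\<lambda>h. G i a x (s # h)) = disc \<beta> P [s1] (G i (\<lambda>k. a (s # k)) (\<zeta> x (a [s]) s))" for s1
    by (rule disc_cong) (simp add: G_shift)
  moreover have "G i a x [s] = g i x (a [s]) s" by (simp add: G_def stateof_single)
  ultimately show ?thesis by simp
qed

lemma Fp_gamma_add: "Fp a l (\<lambda>i. \<gamma> i + l0 i) x0 h = Fp a l \<gamma> x0 h + (\<Sum>i\<in>UNIV. l0 i * G i a x0 h)"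
  unfolding Fp_def by (simp add: distrib_right sum.distrib)

lemma G_disc_summable:
  assumes "a \<in> PL x0" "x0 \<in> X"
  shows "summable (\<lambda>n. \<beta> ^ n * Eh P [s1] n (G i a x0))"
  by (rule disc_summable[OF Pnn Psum b0 b1, of _ _ Bg]) (rule G_bound[OF assms], simp)

lemma Lag_gamma_add:
  assumes a: "a \<in> PL x0" and x0: "x0 \<in> X" and l: "l \<in> Lm s1"
  shows "LG a l (\<lambda>i. \<gamma> i + l0 i) x0 s1 = (\<Sum>t. \<beta> ^ t * Eh P [s1] t (Fp a l \<gamma> x0))
     + (\<Sum>i\<in>UNIV. l0 i * disc \<beta> P [s1] (G i a x0))"
proof -
  have e: "\<beta> ^ t * Eh P [s1] t (Fp a l (\<lambda>i. \<gamma> i + l0 i) x0)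
     = \<beta> ^ t * Eh P [s1] t (Fp a l \<gamma> x0) + (\<Sum>i\<in>UNIV. l0 i * (\<beta> ^ t * Eh P [s1] t (G i a x0)))" for t
    unfolding Fp_gamma_add Eh_add Eh_sum Eh_cmult
    by (simp add: distrib_left sum_distrib_left mult.left_commute)
  have s1: "summable (\<lambda>t. \<Sum>i\<in>UNIV. l0 i * (\<beta> ^ t * Eh P [s1] t (G i a x0)))"
    by (rule summable_sum, rule summable_mult, rule G_disc_summable[OF a x0])
  have "LG a l (\<lambda>i. \<gamma> i + l0 i) x0 s1
      = (\<Sum>t. \<beta> ^ t * Eh P [s1] t (Fp a l \<gamma> x0)) + (\<Sum>t. \<Sum>i\<in>UNIV. l0 i * (\<beta> ^ t * Eh P [s1] t (G i a x0)))"
    unfolding Lag_eq e by (rule suminf_add[OF Lag_summable[OF a x0 l] s1, symmetric])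
  also have "(\<Sum>t. \<Sum>i\<in>UNIV. l0 i * (\<beta> ^ t * Eh P [s1] t (G i a x0)))
      = (\<Sum>i\<in>UNIV. \<Sum>t. l0 i * (\<beta> ^ t * Eh P [s1] t (G i a x0)))"
    by (rule suminf_sum, rule summable_mult, rule G_disc_summable[OF a x0])
  also have "\<dots> = (\<Sum>i\<in>UNIV. l0 i * disc \<beta> P [s1] (G i a x0))"
    unfolding disc_def by (rule sum.cong[OF refl], rule suminf_mult, rule G_disc_summable[OF a x0])
  finally show ?thesis .
qed

end

context dp begin

lemma Lam_intro: "(\<And>h i. 0 \<le> l h i) \<Longrightarrow> summable (LT l s0) \<Longrightarrow> l \<in> Lm s0"
  unfolding Lam_def LT_def[abs_def] by auto

lemma histprob_nonneg: "0 \<le> histprob P s0 sh"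
  unfolding histprob_def using prob_path_nonneg[OF Pnn] by auto

lemma shocks_ne: "shocks k \<noteq> []" by (simp add: shocks_def)

lemma histprob_shift_le: "sh \<noteq> [] \<Longrightarrow> P s s1 * histprob P s1 sh \<le> histprob P s (s # sh)"
proof (cases sh)
  case (Cons c rest)
  show ?thesis
  proof (cases "c = s1")
    case True then show ?thesis using Cons by (simp add: histprob_def)
  next
    case False then show ?thesis using Cons
      by (simp add: histprob_def) (intro mult_nonneg_nonneg prob_path_nonneg Pnn less_imp_le[OF Ppos[rule_format]])
  qed
qed simp

lemma Lam_shift:
  assumes l: "l \<in> Lm s" and a0: "a0 \<in> A"
  shows "(\<lambda>q. l ((s, a0) # fst q, snd q)) \<in> Lm s1"
proof (rule Lam_intro)
  define lc where "lc = (\<lambda>q. l ((s, a0) # fst q, snd q))"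
  show "0 \<le> l ((s, a0) # fst h, snd h) i" for h i by (rule Lam_nonneg[OF l])
  define \<iota> where "\<iota> k = ((s, a0) # fst k, snd k)" for k :: "('s \<times> 'a) list \<times> 's"
  define \<psi> where "\<psi> t h = (\<Sum>i\<in>UNIV. \<beta> ^ t * l h i * histprob P s (shocks h))" for t h
  have pos: "0 < \<beta> * P s s1" using b0 Ppos by simp
  have bound: "LT lc s1 t \<le> LT l s (Suc t) / (\<beta> * P s s1)" for t
  proof -
    have "\<beta> * P s s1 * LT lc s1 t = (\<Sum>k\<in>Hset A t. \<Sum>i\<in>UNIV. \<beta> * P s s1 * (\<beta> ^ t * lc k i * histprob P s1 (shocks k)))"
      unfolding LT_def by (simp add: sum_distrib_left)
    also have "\<dots> \<le> (\<Sum>k\<in>Hset A t. \<psi> (Suc t) (\<iota> k))"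
    proof (rule sum_mono, unfold \<psi>_def, rule sum_mono)
      fix k i
      have sh: "shocks (\<iota> k) = s # shocks k" unfolding \<iota>_def shocks_def by simp
      have "P s s1 * histprob P s1 (shocks k) \<le> histprob P s (shocks (\<iota> k))"
        unfolding sh by (rule histprob_shift_le[OF shocks_ne])
      from mult_left_mono[OF this, of "\<beta> ^ Suc t * lc k i"]
      show "\<beta> * P s s1 * (\<beta> ^ t * lc k i * histprob P s1 (shocks k)) \<le> \<beta> ^ Suc t * l (\<iota> k) i * histprob P s (shocks (\<iota> k))"
        using Lam_nonneg[OF l] b0 unfolding lc_def \<iota>_def by (simp add: mult_ac)
    qed
    also have "\<dots> = (\<Sum>h\<in>\<iota> ` Hset A t. \<psi> (Suc t) h)"
      by (rule sum.reindex[symmetric, unfolded comp_def]) (auto simp: inj_on_def \<iota>_def)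
    also have "\<dots> \<le> (\<Sum>h\<in>Hset A (Suc t). \<psi> (Suc t) h)"
    proof (rule sum_mono2[OF finite_Hset[OF finA]])
      show "\<iota> ` Hset A t \<subseteq> Hset A (Suc t)" using a0 by (auto simp: \<iota>_def Hset_def)
      show "0 \<le> \<psi> (Suc t) h" for h unfolding \<psi>_def
        by (intro sum_nonneg mult_nonneg_nonneg zero_le_power bge Lam_nonneg[OF l] histprob_nonneg)
    qed
    also have "\<dots> = LT l s (Suc t)" unfolding LT_def \<psi>_def ..
    finally show ?thesis using pos by (simp add: field_simps)
  qed
  have "summable (\<lambda>t. LT l s (Suc t) / (\<beta> * P s s1))"
    using Lam_summable[OF l] by (simp add: summable_Suc_iff summable_divide)
  then show "summable (LT (\<lambda>q. l ((s, a0) # fst q, snd q)) s1)"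
    unfolding lc_def[symmetric]
    by (rule summable_comparison_test'[where N = 0])
       (use bound LT_nonneg[of lc] Lam_nonneg[OF l] in \<open>auto simp: lc_def\<close>)
qed

end

context dp begin

lemma Lag_decomp:
  assumes x: "x \<in> X" and a: "a \<in> PL x" and l: "l \<in> Lm s"
  shows "LG a l \<gamma> x s = r x (a [s]) s
     + (\<Sum>i\<in>UNIV. \<gamma> i * g i x (a [s]) s + l ([], s) i * (g i x (a [s]) s - gbar i))
     + \<beta> * (\<Sum>s1\<in>UNIV. P s s1 * LG (\<lambda>k. a (s # k)) (\<lambda>q. l ((s, a [s]) # fst q, snd q))
                                   (\<lambda>i. \<gamma> i + l ([], s) i) (\<zeta> x (a [s]) s) s1)"
proof -
  define a0 where "a0 = a [s]"
  define x' where "x' = \<zeta> x a0 s"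
  define a' where "a' = (\<lambda>k. a (s # k))"
  define lc where "lc = (\<lambda>q. l ((s, a0) # fst q, snd q))"
  define l0 where "l0 = l ([], s)"
  have a0A: "a0 \<in> A" unfolding a0_def by (rule plan_A[OF a]) simp
  have x'X: "x' \<in> X" unfolding x'_def a0_def by (rule state_shift_X[OF a x])
  have a': "a' \<in> PL x'" unfolding a'_def x'_def a0_def by (rule plan_shift[OF a])
  have lc: "lc \<in> Lm s1" for s1 unfolding lc_def by (rule Lam_shift[OF l a0A])
  define S where "S s1 = (\<Sum>t. \<beta> ^ t * Eh P [s1] t (Fp a' lc \<gamma> x'))" for s1
  define D where "D i s1 = disc \<beta> P [s1] (G i a' x')" for i s1
  have sh: "Eh P [s1] n (\<lambda>h. Fp a l \<gamma> x (s # h)) = Eh P [s1] n (Fp a' lc \<gamma> x')" for s1 n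
    by (rule Eh_cong) (simp add: Fp_shift a'_def lc_def a0_def x'_def)
  have "LG a l \<gamma> x s = Fp a l \<gamma> x [s] + \<beta> * (\<Sum>s1\<in>UNIV. P s s1 * S s1)"
    unfolding Lag_eq S_def sh[symmetric]
    by (rule series_head) (simp_all add: sh Lag_summable[OF a' x'X lc] Lag_summable[OF a x l])
  also have "Fp a l \<gamma> x [s] = r x a0 s + (\<Sum>i\<in>UNIV. \<gamma> i * g i x a0 s)
     + (\<Sum>i\<in>UNIV. l0 i * ((g i x a0 s + \<beta> * (\<Sum>s1\<in>UNIV. P s s1 * D i s1)) - gbar i))"
    unfolding Fp_single disc_G_head[OF a x] D_def a0_def l0_def a'_def x'_def ..
  also have LGc: "LG a' lc (\<lambda>i. \<gamma> i + l0 i) x' s1 = S s1 + (\<Sum>i\<in>UNIV. l0 i * D i s1)" for s1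
    unfolding S_def D_def by (rule Lag_gamma_add[OF a' x'X lc])
  have alg: "(\<Sum>i\<in>UNIV. l0 i * ((g i x a0 s + \<beta> * (\<Sum>s1\<in>UNIV. P s s1 * D i s1)) - gbar i))
      = (\<Sum>i\<in>UNIV. l0 i * (g i x a0 s - gbar i)) + \<beta> * (\<Sum>s1\<in>UNIV. P s s1 * (\<Sum>i\<in>UNIV. l0 i * D i s1))"
  proof -
    have "(\<Sum>i\<in>UNIV. l0 i * ((g i x a0 s + \<beta> * (\<Sum>s1\<in>UNIV. P s s1 * D i s1)) - gbar i))
      = (\<Sum>i\<in>UNIV. l0 i * (g i x a0 s - gbar i)) + (\<Sum>i\<in>UNIV. \<Sum>s1\<in>UNIV. \<beta> * (P s s1 * (l0 i * D i s1)))"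
    proof -
      have pw: "l0 i * ((g i x a0 s + \<beta> * (\<Sum>s1\<in>UNIV. P s s1 * D i s1)) - gbar i)
          = l0 i * (g i x a0 s - gbar i) + (\<Sum>s1\<in>UNIV. \<beta> * (P s s1 * (l0 i * D i s1)))" for i
        by (simp add: algebra_simps sum_distrib_left)
      show ?thesis by (simp only: pw sum.distrib)
    qed
    also have "(\<Sum>i\<in>UNIV. \<Sum>s1\<in>UNIV. \<beta> * (P s s1 * (l0 i * D i s1)))
       = \<beta> * (\<Sum>s1\<in>UNIV. P s s1 * (\<Sum>i\<in>UNIV. l0 i * D i s1))"
      by (subst sum.swap) (simp add: sum_distrib_left)
    finally show ?thesis .
  qed
  have "r x a0 s + (\<Sum>i\<in>UNIV. \<gamma> i * g i x a0 s)
     + (\<Sum>i\<in>UNIV. l0 i * ((g i x a0 s + \<beta> * (\<Sum>s1\<in>UNIV. P s s1 * D i s1)) - gbar i))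
     + \<beta> * (\<Sum>s1\<in>UNIV. P s s1 * S s1)
     = r x a0 s + (\<Sum>i\<in>UNIV. \<gamma> i * g i x a0 s + l0 i * (g i x a0 s - gbar i))
     + \<beta> * (\<Sum>s1\<in>UNIV. P s s1 * (S s1 + (\<Sum>i\<in>UNIV. l0 i * D i s1)))"
    unfolding alg by (simp add: sum.distrib distrib_left)
  also have "\<dots> = r x a0 s + (\<Sum>i\<in>UNIV. \<gamma> i * g i x a0 s + l0 i * (g i x a0 s - gbar i))
     + \<beta> * (\<Sum>s1\<in>UNIV. P s s1 * LG a' lc (\<lambda>i. \<gamma> i + l0 i) x' s1)"
    by (simp only: LGc)
  finally show ?thesis unfolding a0_def x'_def a'_def lc_def l0_def by simp
qed

end

context dp begin

lemma Fp_cong_plan: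
  assumes "\<And>h. h \<noteq> [] \<Longrightarrow> hd h = s0 \<Longrightarrow> a h = b h" "h \<noteq> []" "hd h = s0"
  shows "Fp a l \<gamma> x0 h = Fp b l \<gamma> x0 h"
proof -
  have st: "stateof \<zeta> a x0 k = stateof \<zeta> b x0 k" if "k \<noteq> []" "hd k = s0" for k
    by (rule stateof_cong_hd) (use assms(1) that in auto)
  have hg: "histgen a h = histgen b h"
    by (rule histgen_cong_hd) (use assms in auto)
  have Geq: "G i a x0 (h @ e) = G i b x0 (h @ e)" for i e
    unfolding G_def using st[of "h @ e"] assms by simp
  have d: "disc \<beta> P h (G i a x0) = disc \<beta> P h (G i b x0)" for i
    by (rule disc_cong) (rule Geq)
  show ?thesis unfolding Fp_def d hg G_def using st[OF assms(2,3)] assms by simp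
qed

lemma Lag_cong_plan:
  assumes "\<And>h. h \<noteq> [] \<Longrightarrow> hd h = s0 \<Longrightarrow> a h = b h"
  shows "LG a l \<gamma> x0 s0 = LG b l \<gamma> x0 s0"
proof -
  have "Eh P [s0] t (Fp a l \<gamma> x0) = Eh P [s0] t (Fp b l \<gamma> x0)" for t
    by (rule Eh_cong) (rule Fp_cong_plan[OF assms], auto)
  then show ?thesis unfolding Lag_eq by simp
qed

lemma Lag_cong_l:
  assumes "\<And>h. hd (shocks h) = s0 \<Longrightarrow> l h = l' h"
  shows "LG a l \<gamma> x0 s0 = LG a l' \<gamma> x0 s0"
proof -
  have "Fp a l \<gamma> x0 ([s0] @ e) = Fp a l' \<gamma> x0 ([s0] @ e)" for e
    unfolding Fp_def using assms[of "histgen a (s0 # e)"] by (simp add: shocks_histgen)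
  then have "Eh P [s0] t (Fp a l \<gamma> x0) = Eh P [s0] t (Fp a l' \<gamma> x0)" for t
    by (intro Eh_cong) 
  then show ?thesis unfolding Lag_eq by simp
qed

definition build :: "'s \<Rightarrow> 'a \<Rightarrow> ('s \<Rightarrow> 's list \<Rightarrow> 'a) \<Rightarrow> ('s list \<Rightarrow> 'a) \<Rightarrow> 's list \<Rightarrow> 'a" where
  "build s a0 b af = (\<lambda>h. if h = [s] then a0 else if h \<noteq> [] \<and> hd h = s then b (hd (tl h)) (tl h) else af h)"

lemma build_single: "build s a0 b af [s] = a0" by (simp add: build_def)
lemma build_cons: "h \<noteq> [] \<Longrightarrow> build s a0 b af (s # h) = b (hd h) h" by (simp add: build_def)

lemma build_plan:
  assumes x: "x \<in> X" and a0: "a0 \<in> A" and p0: "0 \<le> p x a0 s"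
    and b: "\<And>s1. b s1 \<in> PL (\<zeta> x a0 s)" and af: "af \<in> PL x"
  shows "build s a0 b af \<in> PL x"
  unfolding plans_def
proof (intro CollectI allI impI)
  fix h :: "'s list" assume h: "h \<noteq> []"
  let ?n = "build s a0 b af"
  show "?n h \<in> A \<and> 0 \<le> p (stateof \<zeta> ?n x h) (?n h) (last h)"
  proof (cases "hd h = s")
    case True
    then obtain h' where hh: "h = s # h'" using h by (cases h) auto
    show ?thesis
    proof (cases "h' = []")
      case True then show ?thesis using hh a0 p0 by (simp add: build_single stateof_single)
    next
      case False
      have "stateof \<zeta> ?n x h = stateof \<zeta> (\<lambda>k. ?n (s # k)) (\<zeta> x (?n [s]) s) h'"
        unfolding hh by (rule stateof_shift[OF False])
      also have "\<dots> = stateof \<zeta> (b (hd h')) (\<zeta> x a0 s) h'"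
        unfolding build_single by (rule stateof_cong_hd[OF False]) (simp add: build_cons)
      finally show ?thesis using hh False plan_A[OF b, of h'] plan_p[OF b, of h' "hd h'"]
        by (simp add: build_cons)
    qed
  next
    case False
    have agree: "?n k = af k" if "k \<noteq> []" "hd k = hd h" for k
      using that False by (auto simp: build_def)
    have "stateof \<zeta> ?n x h = stateof \<zeta> af x h" by (rule stateof_cong_hd[OF h agree])
    then show ?thesis using agree[OF h refl] plan_A[OF af h] plan_p[OF af h] by simp
  qed
qed

definition lbuild :: "('i \<Rightarrow> real) \<Rightarrow> ('a \<Rightarrow> 's \<Rightarrow> (('s \<times> 'a) list \<times> 's) \<Rightarrow> 'i \<Rightarrow> real) \<Rightarrow> (('s \<times> 'a) list \<times> 's) \<Rightarrow> 'i \<Rightarrow> real" where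
  "lbuild l0 m = (\<lambda>h. case fst h of [] \<Rightarrow> l0
      | (c, b) # q \<Rightarrow> (if b \<in> A then m b (hd (shocks (q, snd h))) (q, snd h) else (\<lambda>_. 0)))"

lemma lbuild_nil: "lbuild l0 m ([], s') = l0" by (simp add: lbuild_def)

lemma lbuild_cons: "b \<in> A \<Longrightarrow> lbuild l0 m ((c, b) # fst q, snd q) = m b (hd (shocks q)) q"
  by (simp add: lbuild_def)

lemma lbuild_Lam:
  assumes l0: "\<And>i. 0 \<le> l0 i" and m: "\<And>b s1. b \<in> A \<Longrightarrow> m b s1 \<in> Lm s1"
  shows "lbuild l0 m \<in> Lm s"
proof (rule Lam_intro)
  let ?l = "lbuild l0 m"
  show nn: "0 \<le> ?l h i" for h i
    unfolding lbuild_def using l0 Lam_nonneg[OF m] by (auto split: list.split)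
  define j :: "'s \<times> 'a \<times> (('s \<times> 'a) list \<times> 's) \<Rightarrow> ('s \<times> 'a) list \<times> 's"
    where "j = (\<lambda>(c, b, k). ((c, b) # fst k, snd k))"
  define \<psi> where "\<psi> t h = (\<Sum>i\<in>UNIV. \<beta> ^ t * ?l h i * histprob P s (shocks h))" for t h
  define W where "W t b k = (\<Sum>s1\<in>UNIV. \<Sum>i\<in>UNIV. \<beta> ^ t * m b s1 k i * histprob P s1 (shocks k))" for t b k
  have mnn: "b \<in> A \<Longrightarrow> 0 \<le> m b s1 k i" for b s1 k i by (rule Lam_nonneg[OF m])
  have Hs: "Hset A (Suc t) = j ` (UNIV \<times> A \<times> Hset A t)" for t
  proof
    show "j ` (UNIV \<times> A \<times> Hset A t) \<subseteq> Hset A (Suc t)" by (auto simp: j_def Hset_def)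
    show "Hset A (Suc t) \<subseteq> j ` (UNIV \<times> A \<times> Hset A t)"
    proof
      fix h :: "('s \<times> 'a) list \<times> 's" assume "h \<in> Hset A (Suc t)"
      then obtain q s' where h: "h = (q, s')" "length q = Suc t" "\<forall>y\<in>set q. snd y \<in> A"
        by (cases h) (auto simp: Hset_def)
      then obtain c b q' where "q = (c, b) # q'" by (cases q) auto
      then show "h \<in> j ` (UNIV \<times> A \<times> Hset A t)" using h
        by (auto simp: j_def Hset_def image_iff intro!: bexI[where x = "(c, b, q', s')"])
    qed
  qed
  have injj: "inj_on j (UNIV \<times> A \<times> Hset A t)" for t
    by (auto simp: inj_on_def j_def prod_eq_iff)
  have pt: "\<psi> (Suc t) (j (c, b, k)) \<le> (if c = s then \<beta> * W t b k else 0)" if b: "b \<in> A" for t c b k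
  proof (cases "c = s")
    case False
    then show ?thesis unfolding \<psi>_def j_def by (simp add: shocks_def histprob_def)
  next
    case True
    obtain c' rest where sk: "shocks k = c' # rest" using shocks_ne[of k] by (cases "shocks k") auto
    have sj: "shocks (j (c, b, k)) = s # shocks k" unfolding j_def shocks_def using True by simp
    have lj: "?l (j (c, b, k)) = m b c' k" unfolding j_def using lbuild_cons[OF b, of l0 m c k] sk by simp
    have hp: "histprob P s (shocks (j (c, b, k))) \<le> histprob P c' (shocks k)"
      unfolding sj sk histprob_def using Ple1[of s c'] prob_path_nonneg[OF Pnn, of c' rest]
      by (simp add: mult_left_le_one_le[OF prob_path_nonneg[OF Pnn] less_imp_le[OF Ppos[rule_format]]])
    have "\<psi> (Suc t) (j (c, b, k)) \<le> (\<Sum>i\<in>UNIV. \<beta> * (\<beta> ^ t * m b c' k i * histprob P c' (shocks k)))"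
      unfolding \<psi>_def lj
    proof (rule sum_mono)
      fix i
      have "\<beta> ^ Suc t * m b c' k i * histprob P s (shocks (j (c, b, k)))
          \<le> \<beta> ^ Suc t * m b c' k i * histprob P c' (shocks k)"
        by (rule mult_left_mono[OF hp]) (intro mult_nonneg_nonneg zero_le_power bge mnn b)
      then show "\<beta> ^ Suc t * m b c' k i * histprob P s (shocks (j (c, b, k)))
          \<le> \<beta> * (\<beta> ^ t * m b c' k i * histprob P c' (shocks k))" by (simp add: mult_ac)
    qed
    also have "\<dots> = \<beta> * (\<Sum>i\<in>UNIV. \<beta> ^ t * m b c' k i * histprob P c' (shocks k))"
      by (simp add: sum_distrib_left)
    also have "\<dots> \<le> \<beta> * W t b k"
      unfolding W_def
      by (rule mult_left_mono[OF member_le_sum bge])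
         (auto intro!: sum_nonneg mult_nonneg_nonneg zero_le_power bge mnn b histprob_nonneg)
    finally show ?thesis using True by simp
  qed
  have bound: "LT ?l s (Suc t) \<le> \<beta> * (\<Sum>b\<in>A. \<Sum>s1\<in>UNIV. LT (m b s1) s1 t)" for t
  proof -
    have "LT ?l s (Suc t) = (\<Sum>h\<in>Hset A (Suc t). \<psi> (Suc t) h)" unfolding LT_def \<psi>_def ..
    also have "\<dots> = (\<Sum>cbk\<in>UNIV \<times> A \<times> Hset A t. \<psi> (Suc t) (j cbk))"
      unfolding Hs by (rule sum.reindex[OF injj, unfolded comp_def])
    also have "\<dots> = (\<Sum>c\<in>UNIV. \<Sum>b\<in>A. \<Sum>k\<in>Hset A t. \<psi> (Suc t) (j (c, b, k)))"
      by (simp add: sum.cartesian_product)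
    also have "\<dots> \<le> (\<Sum>c\<in>UNIV. \<Sum>b\<in>A. \<Sum>k\<in>Hset A t. (if c = s then \<beta> * W t b k else 0))"
      by (intro sum_mono pt) auto
    also have "\<dots> = (\<Sum>b\<in>A. \<Sum>k\<in>Hset A t. \<beta> * W t b k)"
    proof -
      have "(\<Sum>b\<in>A. \<Sum>k\<in>Hset A t. (if c = s then \<beta> * W t b k else 0))
          = (if c = s then (\<Sum>b\<in>A. \<Sum>k\<in>Hset A t. \<beta> * W t b k) else 0)" for c by simp
      then show ?thesis by (simp only:) (simp add: sum.delta)
    qed
    also have "\<dots> = \<beta> * (\<Sum>b\<in>A. \<Sum>s1\<in>UNIV. LT (m b s1) s1 t)"
      unfolding W_def LT_def by (simp add: sum_distrib_left sum.swap[of _ "Hset A t"])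
    finally show ?thesis .
  qed
  have "summable (\<lambda>t. \<beta> * (\<Sum>b\<in>A. \<Sum>s1\<in>UNIV. LT (m b s1) s1 t))"
    by (intro summable_mult summable_sum Lam_summable m)
  then have "summable (\<lambda>t. LT ?l s (Suc t))"
  proof (rule summable_comparison_test'[where N = 0])
    fix n
    have "0 \<le> LT ?l s (Suc n)" by (rule LT_nonneg) (use nn in blast)
    then show "norm (LT ?l s (Suc n)) \<le> \<beta> * (\<Sum>b\<in>A. \<Sum>s1\<in>UNIV. LT (m b s1) s1 n)"
      using bound[of n] by simp
  qed
  then show "summable (LT ?l s)" by (simp add: summable_Suc_iff)
qed

end

context dp begin

definition V where "V \<gamma> x s l0 a0 = r x a0 s + (\<Sum>i\<in>UNIV. \<gamma> i * g i x a0 s + l0 i * (g i x a0 s - gbar i))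
         + \<beta> * (\<Sum>s'\<in>UNIV. P s s' * DV (\<lambda>i. \<gamma> i + l0 i) (\<zeta> x a0 s) s')"

definition val where "val \<gamma> x s l0 = (SUP a0\<in>{a\<in>A. 0 \<le> p x a s}. V \<gamma> x s l0 a0)"

lemma F0_fin: "finite {a\<in>A. 0 \<le> p x a s}" using finA by simp

lemma F0_ne: "x \<in> X \<Longrightarrow> {a\<in>A. 0 \<le> p x a s} \<noteq> {}"
proof -
  assume x: "x \<in> X"
  obtain a where "a \<in> PL x" using PL_ne[OF x] by blast
  then have "a [s] \<in> {a\<in>A. 0 \<le> p x a s}"
    using plan_A[of a x "[s]"] plan_p[of a x "[s]"] by (simp add: stateof_single)
  then show ?thesis by blast
qed

lemma val_ge: "a0 \<in> {a\<in>A. 0 \<le> p x a s} \<Longrightarrow> V \<gamma> x s l0 a0 \<le> val \<gamma> x s l0"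
  unfolding val_def by (rule cSUP_upper) (auto intro!: bdd_above_finite finite_imageI F0_fin)

lemma val_least: "x \<in> X \<Longrightarrow> (\<And>a0. a0 \<in> {a\<in>A. 0 \<le> p x a s} \<Longrightarrow> V \<gamma> x s l0 a0 \<le> c) \<Longrightarrow> val \<gamma> x s l0 \<le> c"
  unfolding val_def by (rule cSUP_least[OF F0_ne])

lemma Psum1: "(\<Sum>s1\<in>UNIV. P s s1) = 1" using Psum by simp

lemma stepA:
  assumes x: "x \<in> X" and l0: "\<And>i. 0 \<le> l0 i"
  shows "DV \<gamma> x s \<le> val \<gamma> x s l0"
proof (rule field_le_epsilon)
  fix \<epsilon> :: real assume e: "0 < \<epsilon>"
  let ?\<gamma>' = "\<lambda>i. \<gamma> i + l0 i"
  define m where "m b s1 = (if b \<in> A then (SOME l. l \<in> Lm s1 \<and> SL l ?\<gamma>' (\<zeta> x b s) s1 < DV ?\<gamma>' (\<zeta> x b s) s1 + \<epsilon>)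
      else (\<lambda>h i. 0))" for b s1
  have m: "m b s1 \<in> Lm s1 \<and> SL (m b s1) ?\<gamma>' (\<zeta> x b s) s1 < DV ?\<gamma>' (\<zeta> x b s) s1 + \<epsilon>" if b: "b \<in> A" for b s1
  proof -
    have x'X: "\<zeta> x b s \<in> X" using \<zeta>X x b by blast
    have ex: "\<exists>l. l \<in> Lm s1 \<and> SL l ?\<gamma>' (\<zeta> x b s) s1 < DV ?\<gamma>' (\<zeta> x b s) s1 + \<epsilon>"
      using DV_approx[OF x'X e] by blast
    show ?thesis unfolding m_def using b someI_ex[OF ex] by simp
  qed
  define ln where "ln = lbuild l0 m"
  have ln: "ln \<in> Lm s" unfolding ln_def by (rule lbuild_Lam[OF l0]) (use m in blast)
  have "DV \<gamma> x s \<le> SL ln \<gamma> x s" by (rule DV_le[OF x ln])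
  also have "\<dots> \<le> val \<gamma> x s l0 + \<beta> * \<epsilon>"
  proof (rule SL_least[OF x])
    fix a assume a: "a \<in> PL x"
    define a0 where "a0 = a [s]"
    have a0A: "a0 \<in> A" unfolding a0_def by (rule plan_A[OF a]) simp
    have a0F: "a0 \<in> {a\<in>A. 0 \<le> p x a s}"
      using a0A plan_p[OF a, of "[s]"] by (simp add: stateof_single a0_def)
    have x'X: "\<zeta> x a0 s \<in> X" unfolding a0_def by (rule state_shift_X[OF a x])
    have a': "(\<lambda>k. a (s # k)) \<in> PL (\<zeta> x a0 s)" unfolding a0_def by (rule plan_shift[OF a])
    have c: "LG (\<lambda>k. a (s # k)) (\<lambda>q. ln ((s, a0) # fst q, snd q)) ?\<gamma>' (\<zeta> x a0 s) s1
        \<le> DV ?\<gamma>' (\<zeta> x a0 s) s1 + \<epsilon>" for s1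
    proof -
      have "LG (\<lambda>k. a (s # k)) (\<lambda>q. ln ((s, a0) # fst q, snd q)) ?\<gamma>' (\<zeta> x a0 s) s1
          = LG (\<lambda>k. a (s # k)) (m a0 s1) ?\<gamma>' (\<zeta> x a0 s) s1"
        by (rule Lag_cong_l) (simp add: ln_def lbuild_cons[OF a0A])
      also have "\<dots> \<le> SL (m a0 s1) ?\<gamma>' (\<zeta> x a0 s) s1"
        by (rule SL_ge[OF x'X _ a']) (use m[OF a0A] in blast)
      also have "\<dots> \<le> DV ?\<gamma>' (\<zeta> x a0 s) s1 + \<epsilon>" using m[OF a0A, of s1] by simp
      finally show ?thesis .
    qed
    have "LG a ln \<gamma> x s = r x a0 s + (\<Sum>i\<in>UNIV. \<gamma> i * g i x a0 s + l0 i * (g i x a0 s - gbar i))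
       + \<beta> * (\<Sum>s1\<in>UNIV. P s s1 * LG (\<lambda>k. a (s # k)) (\<lambda>q. ln ((s, a0) # fst q, snd q)) ?\<gamma>' (\<zeta> x a0 s) s1)"
      using Lag_decomp[OF x a ln, of \<gamma>] unfolding a0_def by (simp add: ln_def lbuild_nil)
    also have "\<dots> \<le> r x a0 s + (\<Sum>i\<in>UNIV. \<gamma> i * g i x a0 s + l0 i * (g i x a0 s - gbar i))
       + \<beta> * (\<Sum>s1\<in>UNIV. P s s1 * (DV ?\<gamma>' (\<zeta> x a0 s) s1 + \<epsilon>))"
      using c by (intro add_left_mono mult_left_mono[OF _ bge] sum_mono mult_left_mono[OF _ less_imp_le[OF Ppos[rule_format]]]) auto
    also have "\<dots> = V \<gamma> x s l0 a0 + \<beta> * \<epsilon>"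
      unfolding V_def by (simp add: distrib_left sum.distrib sum_distrib_right[symmetric] Psum1)
    also have "\<dots> \<le> val \<gamma> x s l0 + \<beta> * \<epsilon>" by (simp add: val_ge[OF a0F])
    finally show "LG a ln \<gamma> x s \<le> val \<gamma> x s l0 + \<beta> * \<epsilon>" .
  qed
  also have "\<dots> \<le> val \<gamma> x s l0 + \<epsilon>" using mult_right_mono[of \<beta> 1 \<epsilon>] e b1 by simp
  finally show "DV \<gamma> x s \<le> val \<gamma> x s l0 + \<epsilon>" .
qed

lemma stepB:
  assumes x: "x \<in> X" and l: "l \<in> Lm s"
  shows "val \<gamma> x s (l ([], s)) \<le> SL l \<gamma> x s"
proof (rule val_least[OF x])
  fix a0 assume a0F: "a0 \<in> {a\<in>A. 0 \<le> p x a s}"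
  let ?l0 = "l ([], s)"
  let ?\<gamma>' = "\<lambda>i. \<gamma> i + ?l0 i"
  let ?x' = "\<zeta> x a0 s"
  let ?lc = "\<lambda>q. l ((s, a0) # fst q, snd q)"
  have a0A: "a0 \<in> A" using a0F by simp
  have x'X: "?x' \<in> X" using \<zeta>X x a0A by blast
  have lc: "?lc \<in> Lm s1" for s1 by (rule Lam_shift[OF l a0A])
  show "V \<gamma> x s ?l0 a0 \<le> SL l \<gamma> x s"
  proof (rule field_le_epsilon)
    fix \<epsilon> :: real assume e: "0 < \<epsilon>"
    define b where "b s1 = (SOME b. b \<in> PL ?x' \<and> SL ?lc ?\<gamma>' ?x' s1 - \<epsilon> < LG b ?lc ?\<gamma>' ?x' s1)" for s1
    have b: "b s1 \<in> PL ?x' \<and> SL ?lc ?\<gamma>' ?x' s1 - \<epsilon> < LG (b s1) ?lc ?\<gamma>' ?x' s1" for s1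
    proof -
      have ex: "\<exists>b. b \<in> PL ?x' \<and> SL ?lc ?\<gamma>' ?x' s1 - \<epsilon> < LG b ?lc ?\<gamma>' ?x' s1"
        using SL_approx[OF x'X lc[of s1] e] by blast
      show ?thesis unfolding b_def by (rule someI_ex[OF ex])
    qed
    obtain af where af: "af \<in> PL x" using PL_ne[OF x] by blast
    define an where "an = build s a0 b af"
    have an: "an \<in> PL x" unfolding an_def
      by (rule build_plan[OF x a0A _ _ af]) (use a0F b in auto)
    have an0: "an [s] = a0" unfolding an_def by (rule build_single)
    have c: "DV ?\<gamma>' ?x' s1 - \<epsilon> \<le> LG (\<lambda>k. an (s # k)) ?lc ?\<gamma>' ?x' s1" for s1
    proof -
      have "DV ?\<gamma>' ?x' s1 \<le> SL ?lc ?\<gamma>' ?x' s1" by (rule DV_le[OF x'X lc])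
      also have "SL ?lc ?\<gamma>' ?x' s1 - \<epsilon> \<le> LG (b s1) ?lc ?\<gamma>' ?x' s1" using b[of s1] by simp
      also have "LG (b s1) ?lc ?\<gamma>' ?x' s1 = LG (\<lambda>k. an (s # k)) ?lc ?\<gamma>' ?x' s1"
        by (rule Lag_cong_plan) (simp add: an_def build_cons)
      finally show ?thesis by simp
    qed
    have "V \<gamma> x s ?l0 a0 - \<beta> * \<epsilon> = r x a0 s + (\<Sum>i\<in>UNIV. \<gamma> i * g i x a0 s + ?l0 i * (g i x a0 s - gbar i))
       + \<beta> * (\<Sum>s1\<in>UNIV. P s s1 * (DV ?\<gamma>' ?x' s1 - \<epsilon>))"
      unfolding V_def by (simp add: right_diff_distrib sum_subtractf sum_distrib_right[symmetric] Psum1)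
    also have "\<dots> \<le> r x a0 s + (\<Sum>i\<in>UNIV. \<gamma> i * g i x a0 s + ?l0 i * (g i x a0 s - gbar i))
       + \<beta> * (\<Sum>s1\<in>UNIV. P s s1 * LG (\<lambda>k. an (s # k)) ?lc ?\<gamma>' ?x' s1)"
      using c by (intro add_left_mono mult_left_mono[OF _ bge] sum_mono mult_left_mono[OF _ less_imp_le[OF Ppos[rule_format]]]) auto
    also have "\<dots> = LG an l \<gamma> x s"
      using Lag_decomp[OF x an l, of \<gamma>] unfolding an0 by simp
    also have "\<dots> \<le> SL l \<gamma> x s" by (rule SL_ge[OF x l an])
    moreover have "\<beta> * \<epsilon> \<le> \<epsilon>" using mult_right_mono[of \<beta> 1 \<epsilon>] e b1 by simp
    ultimately show "V \<gamma> x s ?l0 a0 \<le> SL l \<gamma> x s + \<epsilon>" by linarith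
  qed
qed

lemma main:
  assumes x: "x \<in> X"
  shows "DV \<gamma> x s = (INF l0\<in>{l0. \<forall>i. 0 \<le> l0 i}. val \<gamma> x s l0)"
proof (rule antisym)
  show "DV \<gamma> x s \<le> (INF l0\<in>{l0. \<forall>i. 0 \<le> l0 i}. val \<gamma> x s l0)"
    by (rule cINF_greatest) (auto intro: stepA[OF x])
  have bdd: "bdd_below ((\<lambda>l0. val \<gamma> x s l0) ` {l0. \<forall>i. 0 \<le> l0 i})"
    by (rule bdd_belowI2[where m = "DV \<gamma> x s"]) (auto intro: stepA[OF x])
  show "(INF l0\<in>{l0. \<forall>i. 0 \<le> l0 i}. val \<gamma> x s l0) \<le> DV \<gamma> x s"
    unfolding DV_eq
  proof (rule cINF_greatest)
    show "Lm s \<noteq> {}" using Lam_zero by blast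
    fix l :: "(('s \<times> 'a) list \<times> 's) \<Rightarrow> 'i \<Rightarrow> real" assume l: "l \<in> Lm s"
    have "(INF l0\<in>{l0. \<forall>i. 0 \<le> l0 i}. val \<gamma> x s l0) \<le> val \<gamma> x s (l ([], s))"
      by (rule cINF_lower[OF bdd]) (simp add: Lam_nonneg[OF l])
    also have "\<dots> \<le> SL l \<gamma> x s" by (rule stepB[OF x l])
    finally show "(INF l0\<in>{l0. \<forall>i. 0 \<le> l0 i}. val \<gamma> x s l0) \<le> SL l \<gamma> x s" .
  qed
qed

end

theorem theorem3p1:
  fixes A :: "'a set" and X :: "'x set"
    and P :: "'s::finite \<Rightarrow> 's \<Rightarrow> real"
    and \<zeta> :: "'x \<Rightarrow> 'a \<Rightarrow> 's \<Rightarrow> 'x" and p r :: "'x \<Rightarrow> 'a \<Rightarrow> 's \<Rightarrow> real"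
    and g :: "'i::finite \<Rightarrow> 'x \<Rightarrow> 'a \<Rightarrow> 's \<Rightarrow> real" and gbar :: "'i \<Rightarrow> real"
    and \<beta> :: real and \<gamma> :: "'i \<Rightarrow> real" and x :: 'x and s :: 's
  assumes "finite A"
    and "countable X"
    and "\<forall>s s'. 0 < P s s'"
    and "\<forall>s. (\<Sum>s'\<in>UNIV. P s s') = 1"
    and "\<forall>x\<in>X. \<forall>a\<in>A. \<forall>s. \<zeta> x a s \<in> X"
    and "\<exists>B. \<forall>x\<in>X. \<forall>a\<in>A. \<forall>s. \<bar>r x a s\<bar> \<le> B"
    and "\<forall>i. \<exists>B. \<forall>x\<in>X. \<forall>a\<in>A. \<forall>s. \<bar>g i x a s\<bar> \<le> B"
    and "0 < \<beta>" and "\<beta> < 1"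
    and "\<forall>x0\<in>X. \<forall>s0. \<exists>a. feasible A p \<zeta> g gbar \<beta> P x0 s0 a"
    and "x \<in> X"
    and "\<forall>i. 0 \<le> \<gamma> i"
  shows "Dval A p r g gbar \<zeta> \<beta> P \<gamma> x s =
    (INF l\<in>{l::'i \<Rightarrow> real. \<forall>i. 0 \<le> l i}.
       SUP a\<in>{a\<in>A. 0 \<le> p x a s}.
         r x a s + (\<Sum>i\<in>UNIV. \<gamma> i * g i x a s + l i * (g i x a s - gbar i))
         + \<beta> * (\<Sum>s'\<in>UNIV. P s s' * Dval A p r g gbar \<zeta> \<beta> P (\<lambda>i. \<gamma> i + l i) (\<zeta> x a s) s'))"
proof -
  obtain Br where Br: "\<forall>x\<in>X. \<forall>a\<in>A. \<forall>s. \<bar>r x a s\<bar> \<le> Br" using assms(6) by blast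
  obtain Bf where Bf: "\<forall>i. \<forall>x\<in>X. \<forall>a\<in>A. \<forall>s. \<bar>g i x a s\<bar> \<le> Bf i" using assms(7) by metis
  define Bg where "Bg = (\<Sum>i\<in>UNIV. \<bar>Bf i\<bar>)"
  have gB: "\<bar>g i x a s\<bar> \<le> Bg" if "x \<in> X" "a \<in> A" for i x a s
  proof -
    have "\<bar>Bf i\<bar> \<le> Bg" unfolding Bg_def by (rule member_le_sum) auto
    moreover have "\<bar>g i x a s\<bar> \<le> Bf i" using Bf that by blast
    ultimately show ?thesis by linarith
  qed
  interpret dp A X P \<zeta> p r g gbar \<beta> "\<bar>Br\<bar>" Bg
  proof
    fix x a s assume "x \<in> X" "a \<in> A"
    then have "\<bar>r x a s\<bar> \<le> Br" using Br by blast
    then show "\<bar>r x a s\<bar> \<le> \<bar>Br\<bar>" by linarith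
  next
    show "0 \<le> Bg" unfolding Bg_def by (rule sum_nonneg) auto
  qed (use assms gB in auto)
  show ?thesis using main[OF assms(11), of \<gamma> s] unfolding val_def V_def by simp
qed

end
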